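(* Let $|\Psi\rangle$ be a pure state and $\sigma$ a density operator on a finite-dimensional Hilbert space, $H$ Hermitian, and $0<\epsilon$ with $\||\Psi\rangle\langle\Psi|-\sigma\|_1\le\epsilon$. Then the eigenvector $|\Phi\rangle$ of $\sigma$ with the largest eigenvalue satisfies $|\langle\Psi|\Phi\rangle|^2\ge1-\epsilon$ and $$P_H(\sigma)\ge V_H(\Phi)\,(2\epsilon^{-1}-3).$$
   Context: $V_H(\Phi)=\langle\Phi|H^2|\Phi\rangle-\langle\Phi|H|\Phi\rangle^2$. Purity of coherence: $P_H(\sigma)=\mathrm{Tr}(H\sigma^2H\sigma^{-1})-\mathrm{Tr}(\sigma H^2)$ ($\sigma^{-1}$ inverse on the support) if $\mathrm{supp}(H\sigma H)\subseteq\mathrm{supp}(\sigma)$, else $\infty$. *)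

theory Defs
  imports "Jordan_Normal_Form.Schur_Decomposition" "HOL-Library.Extended_Real"
begin

text \<open>Finite-dimensional Hilbert space C^n; operators are n x n complex matrices.\<close>

definition mtrace :: "complex mat \<Rightarrow> complex" where
  "mtrace A = (\<Sum>i<dim_row A. A $$ (i,i))"

definition hermitian_mat :: "nat \<Rightarrow> complex mat \<Rightarrow> bool" where
  "hermitian_mat n A \<longleftrightarrow> A \<in> carrier_mat n n \<and> mat_adjoint A = A"

definition psd_mat :: "nat \<Rightarrow> complex mat \<Rightarrow> bool" where
  "psd_mat n A \<longleftrightarrow> hermitian_mat n A \<and>
     (\<forall>v \<in> carrier_vec n. 0 \<le> Re ((A *\<^sub>v v) \<bullet>c v))"

definition density_op :: "nat \<Rightarrow> complex mat \<Rightarrow> bool" where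
  "density_op n \<sigma> \<longleftrightarrow> psd_mat n \<sigma> \<and> mtrace \<sigma> = 1"

definition unit_state :: "nat \<Rightarrow> complex vec \<Rightarrow> bool" where
  "unit_state n \<psi> \<longleftrightarrow> \<psi> \<in> carrier_vec n \<and> \<psi> \<bullet>c \<psi> = 1"

definition ket_bra :: "complex vec \<Rightarrow> complex mat" where
  "ket_bra \<psi> = mat (dim_vec \<psi>) (dim_vec \<psi>) (\<lambda>(i,j). \<psi> $ i * cnj (\<psi> $ j))"

definition abs_mat :: "complex mat \<Rightarrow> complex mat" where
  "abs_mat A = (THE B. psd_mat (dim_col A) B \<and> B * B = mat_adjoint A * A)"

definition trace_norm :: "complex mat \<Rightarrow> real" where
  "trace_norm A = Re (mtrace (abs_mat A))"

definition mat_support :: "complex mat \<Rightarrow> complex vec set" where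
  "mat_support A = {A *\<^sub>v v | v. v \<in> carrier_vec (dim_col A)}"

text \<open>inverse on the support: for Hermitian sigma this is the Moore-Penrose pseudoinverse\<close>
definition supp_inv :: "complex mat \<Rightarrow> complex mat" where
  "supp_inv A = (THE X. X \<in> carrier_mat (dim_col A) (dim_row A) \<and>
      A * X * A = A \<and> X * A * X = X \<and>
      mat_adjoint (A * X) = A * X \<and> mat_adjoint (X * A) = X * A)"

definition variance_H :: "complex mat \<Rightarrow> complex vec \<Rightarrow> real" where
  "variance_H H \<phi> = Re (((H * H) *\<^sub>v \<phi>) \<bullet>c \<phi> - ((H *\<^sub>v \<phi>) \<bullet>c \<phi>)^2)"

definition purity_coh :: "complex mat \<Rightarrow> complex mat \<Rightarrow> ereal" where
  "purity_coh H \<sigma> = (if mat_support (H * \<sigma> * H) \<subseteq> mat_support \<sigma>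
     then ereal (Re (mtrace (H * \<sigma> * \<sigma> * H * supp_inv \<sigma>) - mtrace (\<sigma> * (H * H))))
     else \<infinity>)"

end

theory Submission
  imports Defs
begin


lemma adj_dim[simp]: "dim_row (mat_adjoint A) = dim_col A" "dim_col (mat_adjoint A) = dim_row A"
  unfolding mat_adjoint_def by (simp_all add: mat_of_rows_def)

lemma adj_carrier[simp]: "A \<in> carrier_mat n m \<Longrightarrow> mat_adjoint A \<in> carrier_mat m n"
  unfolding carrier_mat_def by simp

lemma adj_index[simp]: assumes i: "i < dim_col A" and j: "j < dim_row A"
  shows "mat_adjoint A $$ (i,j) = cnj (A $$ (j,i))"
proof -
  have "mat_adjoint A $$ (i,j) = (map conjugate (cols A) ! i) $ j" unfolding mat_adjoint_def 
    by (rule mat_of_rows_index) (simp_all add: i j)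
  also have "\<dots> = conjugate (col A i) $ j" using i by simp
  also have "\<dots> = conjugate (col A i $ j)" using j by (simp only: vec_index_conjugate dim_col)
  also have "\<dots> = cnj (A $$ (j,i))" using i j by simp
  finally show ?thesis .
qed

lemma mult_index: assumes A: "A \<in> carrier_mat n k" and B: "B \<in> carrier_mat k m" and i: "i < n" and j: "j < m"
  shows "(A * B) $$ (i,j) = (\<Sum>a<k. A $$ (i,a) * B $$ (a,j))"
proof -
  have d: "dim_row A = n" "dim_col A = k" "dim_row B = k" "dim_col B = m" using A B by auto
  have "(A * B) $$ (i,j) = row A i \<bullet> col B j" using i j d by (intro index_mult_mat) auto
  also have "\<dots> = (\<Sum>a\<in>{0..<k}. row A i $ a * col B j $ a)" unfolding scalar_prod_def using d by simp
  also have "\<dots> = (\<Sum>a<k. A $$ (i,a) * B $$ (a,j))" unfolding atLeast0LessThan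
    by (rule sum.cong, rule refl, insert i j d, auto)
  finally show ?thesis .
qed

lemma mult_vec_index: assumes A: "A \<in> carrier_mat n k" and v: "v \<in> carrier_vec k" and i: "i < n"
  shows "(A *\<^sub>v v) $ i = (\<Sum>a<k. A $$ (i,a) * v $ a)"
proof -
  have d: "dim_row A = n" "dim_col A = k" "dim_vec v = k" using A v by auto
  have "(A *\<^sub>v v) $ i = row A i \<bullet> v" using i d by (intro index_mult_mat_vec) auto
  also have "\<dots> = (\<Sum>a\<in>{0..<k}. row A i $ a * v $ a)" unfolding scalar_prod_def using d by simp
  also have "\<dots> = (\<Sum>a<k. A $$ (i,a) * v $ a)" unfolding atLeast0LessThan
    by (rule sum.cong, rule refl, insert i d, auto)
  finally show ?thesis .
qed

lemma cprod_def': assumes v: "v \<in> carrier_vec n" and w: "w \<in> carrier_vec n"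
  shows "v \<bullet>c w = (\<Sum>a<n. v $ a * cnj (w $ a))"
proof -
  have d: "dim_vec v = n" "dim_vec w = n" using v w by auto
  show ?thesis unfolding scalar_prod_def using d by (simp add: atLeast0LessThan)
qed


lemma adj_adj[simp]: "mat_adjoint (mat_adjoint A) = (A :: complex mat)"
proof (rule eq_matI)
  fix i j assume "i < dim_row A" "j < dim_col A"
  thus "mat_adjoint (mat_adjoint A) $$ (i, j) = A $$ (i, j)" by (simp add: adj_index)
qed simp_all

lemma adj_mult: assumes A: "A \<in> carrier_mat n k" and B: "B \<in> carrier_mat k m"
  shows "mat_adjoint (A * B) = mat_adjoint B * mat_adjoint (A :: complex mat)"
proof (rule eq_matI)
  have AB: "A * B \<in> carrier_mat n m" using A B by simp
  fix i j assume "i < dim_row (mat_adjoint B * mat_adjoint A)" "j < dim_col (mat_adjoint B * mat_adjoint A)"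
  hence i: "i < m" and j: "j < n" using A B by auto
  have "mat_adjoint (A * B) $$ (i, j) = cnj ((A * B) $$ (j,i))" using AB i j by (intro adj_index) auto
  also have "\<dots> = cnj (\<Sum>a<k. A $$ (j,a) * B $$ (a,i))" by (subst mult_index[OF A B j i], rule refl)
  also have "\<dots> = (\<Sum>a<k. mat_adjoint B $$ (i,a) * mat_adjoint A $$ (a,j))"
    unfolding cnj_sum
    by (rule sum.cong[OF refl], insert A B i j, simp add: adj_index mult.commute)
  also have "\<dots> = (mat_adjoint B * mat_adjoint A) $$ (i, j)"
    by (rule mult_index[symmetric], insert A B i j, auto)
  finally show "mat_adjoint (A * B) $$ (i, j) = (mat_adjoint B * mat_adjoint A) $$ (i, j)" .
qed (insert A B, auto)

lemma adj_minus: assumes "A \<in> carrier_mat n m" "B \<in> carrier_mat n m"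
  shows "mat_adjoint (A - B) = mat_adjoint A - mat_adjoint (B :: complex mat)"
proof (rule eq_matI)
  fix i j assume "i < dim_row (mat_adjoint A - mat_adjoint B)" "j < dim_col (mat_adjoint A - mat_adjoint B)"
  thus "mat_adjoint (A - B) $$ (i, j) = (mat_adjoint A - mat_adjoint B) $$ (i, j)"
    using assms by (simp add: adj_index)
qed (insert assms, auto)

lemma adj_one[simp]: "mat_adjoint (1\<^sub>m n :: complex mat) = 1\<^sub>m n"
proof (rule eq_matI)
  fix i j assume "i < dim_row (1\<^sub>m n :: complex mat)" "j < dim_col (1\<^sub>m n :: complex mat)"
  thus "mat_adjoint (1\<^sub>m n :: complex mat) $$ (i, j) = 1\<^sub>m n $$ (i, j)" by (simp add: adj_index)
qed simp_all




lemma cprod_adj: fixes w :: "complex vec" assumes A: "A \<in> carrier_mat n m" and v: "v \<in> carrier_vec m" and w: "w \<in> carrier_vec n"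
  shows "(A *\<^sub>v v) \<bullet>c w = v \<bullet>c (mat_adjoint A *\<^sub>v w)"
proof -
  have Av: "A *\<^sub>v v \<in> carrier_vec n" using A v by simp
  have Aw: "mat_adjoint A *\<^sub>v w \<in> carrier_vec m" by (rule mult_mat_vec_carrier[OF adj_carrier[OF A] w])
  have "(A *\<^sub>v v) \<bullet>c w = (\<Sum>i<n. (A *\<^sub>v v) $ i * cnj (w $ i))" by (rule cprod_def'[OF Av w])
  also have "\<dots> = (\<Sum>i<n. (\<Sum>a<m. A $$ (i, a) * v $ a) * cnj (w $ i))"
    by (rule sum.cong[OF refl], subst mult_vec_index[OF A v], auto)
  also have "\<dots> = (\<Sum>i<n. \<Sum>a<m. v $ a * cnj (cnj (A $$ (i, a)) * w $ i))"
    by (simp add: sum_distrib_right sum_distrib_left mult_ac)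
  also have "\<dots> = (\<Sum>a<m. \<Sum>i<n. v $ a * cnj (cnj (A $$ (i, a)) * w $ i))"
    by (rule sum.swap)
  also have "\<dots> = (\<Sum>a<m. v $ a * cnj (\<Sum>i<n. mat_adjoint A $$ (a, i) * w $ i))"
    unfolding cnj_sum sum_distrib_left
    by (rule sum.cong[OF refl], rule sum.cong[OF refl], insert A, simp add: adj_index)
  also have "\<dots> = (\<Sum>a<m. v $ a * cnj ((mat_adjoint A *\<^sub>v w) $ a))"
    by (rule sum.cong[OF refl], subst mult_vec_index[OF _ w], insert A, auto)
  also have "\<dots> = v \<bullet>c (mat_adjoint A *\<^sub>v w)" by (rule cprod_def'[OF v Aw, symmetric])
  finally show ?thesis .
qed

lemma cprod_self: fixes v :: "complex vec" assumes v: "v \<in> carrier_vec n"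
  shows "v \<bullet>c v = of_real (\<Sum>a<n. (cmod (v $ a))^2)"
  unfolding cprod_def'[OF v v] of_real_sum by (rule sum.cong[OF refl], rule complex_norm_square[symmetric])

lemma cprod_self_Re: fixes v :: "complex vec" shows "v \<in> carrier_vec n \<Longrightarrow> v \<bullet>c v = of_real (Re (v \<bullet>c v))"
  by (subst (1 2) cprod_self, auto)

lemma cprod_self_nonneg: fixes v :: "complex vec" shows "v \<in> carrier_vec n \<Longrightarrow> 0 \<le> Re (v \<bullet>c v)"
  by (subst cprod_self, auto intro: sum_nonneg)

lemma cprod_self_zero: fixes v :: "complex vec" assumes v: "v \<in> carrier_vec n" and z: "Re (v \<bullet>c v) = 0"
  shows "v = 0\<^sub>v n"
proof -
  from z have "(\<Sum>a<n. (cmod (v $ a))^2) = 0" by (subst (asm) cprod_self[OF v], simp)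
  hence "\<forall>a\<in>{..<n}. (cmod (v $ a))^2 = 0" by (subst (asm) sum_nonneg_eq_0_iff, auto)
  thus ?thesis using v by (intro eq_vecI, auto)
qed

lemma cprod_comm: fixes v w :: "complex vec" assumes "v \<in> carrier_vec n" "w \<in> carrier_vec n"
  shows "v \<bullet>c w = cnj (w \<bullet>c v)"
  using assms by (simp add: cprod_def' cnj_sum mult.commute)




lemma cprod_smult: fixes v w :: "complex vec" assumes v: "v \<in> carrier_vec n" and w: "w \<in> carrier_vec n"
  shows "(a \<cdot>\<^sub>v v) \<bullet>c (b \<cdot>\<^sub>v w) = a * cnj b * (v \<bullet>c w)"
proof -
  have av: "a \<cdot>\<^sub>v v \<in> carrier_vec n" and bw: "b \<cdot>\<^sub>v w \<in> carrier_vec n" using v w by auto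
  show ?thesis unfolding cprod_def'[OF av bw] cprod_def'[OF v w] sum_distrib_left
    by (rule sum.cong[OF refl], insert v w, auto simp: mult_ac)
qed

lemma adj_cols_index: fixes us :: "complex vec list"
  assumes us: "set us \<subseteq> carrier_vec n" and i: "i < length us" and j: "j < length us"
  shows "(mat_adjoint (mat_of_cols n us) * mat_of_cols n us) $$ (i,j) = us ! j \<bullet>c us ! i"
proof -
  let ?W = "mat_of_cols n us"
  have W: "?W \<in> carrier_mat n (length us)" by simp
  have ui: "us ! i \<in> carrier_vec n" and uj: "us ! j \<in> carrier_vec n" using us i j by auto
  have "(mat_adjoint ?W * ?W) $$ (i,j) = (\<Sum>a<n. mat_adjoint ?W $$ (i,a) * ?W $$ (a,j))"
    by (rule mult_index[OF adj_carrier[OF W] W i j])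
  also have "\<dots> = (\<Sum>a<n. us ! j $ a * cnj (us ! i $ a))"
    by (rule sum.cong[OF refl], insert i j, simp add: adj_index mat_of_cols_index mult.commute)
  also have "\<dots> = us ! j \<bullet>c us ! i" by (rule cprod_def'[OF uj ui, symmetric])
  finally show ?thesis .
qed

lemma unitary_completion: fixes u :: "complex vec"
  assumes u: "u \<in> carrier_vec n" and nu: "u \<bullet>c u = 1"
  shows "\<exists>W. W \<in> carrier_mat n n \<and> mat_adjoint W * W = 1\<^sub>m n \<and> col W 0 = u"
proof -
  interpret cof_vec_space n "TYPE(complex)" .
  have u0: "u \<noteq> 0\<^sub>v n" using nu u by auto
  have n: "0 < n"
  proof (rule ccontr)
    assume "\<not> 0 < n" hence "n = 0" by simp
    hence "u \<bullet>c u = 0" using u by (simp add: cprod_def')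
    thus False using nu by simp
  qed
  define b where "b = basis_completion u"
  from basis_completion[OF u u0, folded b_def]
  have b: "set b \<subseteq> carrier_vec n" "distinct b" "\<not> lin_dep (set b)" "length b = n" "hd b = u" by auto
  from b(4,5) n obtain vs where bv: "b = u # vs" by (cases b, auto)
  define ws where "ws = gram_schmidt n b"
  from gram_schmidt_result[OF b(1) b(2) b(3) ws_def]
  have ws: "corthogonal ws" "set ws \<subseteq> carrier_vec n" "length ws = n" using b(4) by auto
  have hd: "hd ws = u" using gram_schmidt_hd[OF u, of vs] bv ws_def by simp
  define nz where "nz w = (of_real (1 / sqrt (Re (w \<bullet>c w))) :: complex) \<cdot>\<^sub>v w" for w :: "complex vec"
  define us where "us = map nz ws"
  define W where "W = mat_of_cols n us"
  have us: "set us \<subseteq> carrier_vec n" "length us = n" using ws unfolding us_def nz_def by auto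
  have W: "W \<in> carrier_mat n n" unfolding W_def using us by auto
  have WW: "mat_adjoint W * W = 1\<^sub>m n"
  proof (rule eq_matI)
    fix i j assume "i < dim_row (1\<^sub>m n :: complex mat)" "j < dim_col (1\<^sub>m n :: complex mat)"
    hence i: "i < n" and j: "j < n" by auto
    have wi: "ws ! i \<in> carrier_vec n" and wj: "ws ! j \<in> carrier_vec n" using ws i j by auto
    have "(mat_adjoint W * W) $$ (i,j) = us ! j \<bullet>c us ! i" unfolding W_def
      by (rule adj_cols_index, insert us i j, auto)
    also have "\<dots> = nz (ws ! j) \<bullet>c nz (ws ! i)" unfolding us_def using ws i j by simp
    also have "\<dots> = of_real (1 / sqrt (Re (ws ! j \<bullet>c ws ! j))) * of_real (1 / sqrt (Re (ws ! i \<bullet>c ws ! i))) * (ws ! j \<bullet>c ws ! i)"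
      unfolding nz_def by (subst cprod_smult[OF wj wi], simp)
    also have "\<dots> = 1\<^sub>m n $$ (i,j)"
    proof (cases "i = j")
      case True
      have ne: "ws ! i \<bullet>c ws ! i \<noteq> 0" using ws(1) i ws(3) unfolding corthogonal_def by auto
      define r where "r = Re (ws ! i \<bullet>c ws ! i)"
      have e: "ws ! i \<bullet>c ws ! i = of_real r" unfolding r_def by (rule cprod_self_Re[OF wi])
      have r0: "r \<ge> 0" using cprod_self_nonneg[OF wi] unfolding r_def .
      have "r \<noteq> 0" using ne e by auto
      hence r: "r > 0" using r0 by simp
      have "of_real (1 / sqrt r) * of_real (1 / sqrt r) * of_real r = (of_real (1 / sqrt r * (1 / sqrt r) * r) :: complex)" by (simp only: of_real_mult)
      also have "1 / sqrt r * (1 / sqrt r) * r = 1"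
      proof -
        have s: "sqrt r * sqrt r = r" using r by simp
        have "sqrt r > 0" using r by simp
        thus ?thesis using s by (simp add: field_simps)
      qed
      finally have c1: "of_real (1 / sqrt r) * of_real (1 / sqrt r) * of_real r = (1 :: complex)" by simp
      have g: "of_real (1 / sqrt (Re (ws ! i \<bullet>c ws ! i))) * of_real (1 / sqrt (Re (ws ! i \<bullet>c ws ! i))) * (ws ! i \<bullet>c ws ! i) = (1::complex)"
        unfolding e Re_complex_of_real by (rule c1)
      show ?thesis unfolding True[symmetric] g using i by simp
    next
      case False
      have "ws ! j \<bullet>c ws ! i = 0" using ws(1) i j ws(3) False unfolding corthogonal_def by auto
      thus ?thesis using False i j by simp
    qed
    finally show "(mat_adjoint W * W) $$ (i,j) = 1\<^sub>m n $$ (i,j)" .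
  qed (insert W, auto)
  have "col W 0 = us ! 0" unfolding W_def using us n by (intro col_mat_of_cols, auto)
  also have "\<dots> = nz u" unfolding us_def using hd ws(3) n by (cases ws, auto)
  also have "\<dots> = u" unfolding nz_def nu by simp
  finally show ?thesis using W WW by blast
qed




lemma sum_shift: "(\<Sum>a<Suc m. f a) = f 0 + (\<Sum>a<m. f (Suc a))"
  by (induction m) (simp_all add: add.assoc)

definition dmat :: "nat \<Rightarrow> (nat \<Rightarrow> real) \<Rightarrow> complex mat" where
  "dmat n d = mat n n (\<lambda>(i,j). if i = j then complex_of_real (d i) else 0)"

lemma dmat_carrier[simp]: "dmat n d \<in> carrier_mat n n" unfolding dmat_def by simp

lemma dmat_index: "i < n \<Longrightarrow> j < n \<Longrightarrow> dmat n d $$ (i,j) = (if i = j then complex_of_real (d i) else 0)"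
  unfolding dmat_def by simp

lemma mult_dmat_index: assumes M: "M \<in> carrier_mat k n" and i: "i < k" and j: "j < n"
  shows "(M * dmat n d) $$ (i,j) = M $$ (i,j) * d j"
proof -
  have "(M * dmat n d) $$ (i,j) = (\<Sum>a<n. M $$ (i,a) * dmat n d $$ (a,j))" by (rule mult_index[OF M dmat_carrier i j])
  also have "\<dots> = (\<Sum>a<n. if a = j then M $$ (i,j) * d j else 0)"
    by (rule sum.cong[OF refl], insert j, auto simp: dmat_index)
  also have "\<dots> = M $$ (i,j) * d j" using j by simp
  finally show ?thesis .
qed

lemma dmat_mult_index: assumes M: "M \<in> carrier_mat n k" and i: "i < n" and j: "j < k"
  shows "(dmat n d * M) $$ (i,j) = d i * M $$ (i,j)"
proof -
  have "(dmat n d * M) $$ (i,j) = (\<Sum>a<n. dmat n d $$ (i,a) * M $$ (a,j))" by (rule mult_index[OF dmat_carrier M i j])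
  also have "\<dots> = (\<Sum>a<n. if a = i then d i * M $$ (i,j) else 0)"
    by (rule sum.cong[OF refl], insert i, auto simp: dmat_index)
  also have "\<dots> = d i * M $$ (i,j)" using i by simp
  finally show ?thesis .
qed

lemma hermitian_index: "hermitian_mat n A \<Longrightarrow> i < n \<Longrightarrow> j < n \<Longrightarrow> A $$ (i,j) = cnj (A $$ (j,i))"
  unfolding hermitian_mat_def by (metis adj_index carrier_matD(1) carrier_matD(2))




lemma dmat_dim[simp]: "dim_row (dmat n d) = n" "dim_col (dmat n d) = n" unfolding dmat_def by simp_all

lemma unitary_right: assumes U: "U \<in> carrier_mat n n" and UU: "mat_adjoint U * U = 1\<^sub>m n"
  shows "U * mat_adjoint U = (1\<^sub>m n :: complex mat)"
  by (rule mat_mult_left_right_inverse[OF adj_carrier[OF U] U UU])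

lemma spectral_step:
  fixes A :: "complex mat"
  assumes herm: "hermitian_mat (Suc m) A"
    and u: "u \<in> carrier_vec (Suc m)" and nu: "u \<bullet>c u = 1" and eig: "A *\<^sub>v u = e \<cdot>\<^sub>v u"
    and IH: "\<And>B. hermitian_mat m B \<Longrightarrow> \<exists>V d. V \<in> carrier_mat m m \<and> mat_adjoint V * V = 1\<^sub>m m \<and> B * V = V * dmat m d"
  shows "\<exists>U d. U \<in> carrier_mat (Suc m) (Suc m) \<and> mat_adjoint U * U = 1\<^sub>m (Suc m) \<and> A * U = U * dmat (Suc m) d \<and> col U 0 = u"
proof -
  define n where "n = Suc m"
  have A: "A \<in> carrier_mat n n" and Aadj: "mat_adjoint A = A" using herm unfolding hermitian_mat_def n_def by auto
  have u': "u \<in> carrier_vec n" using u n_def by simp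
  obtain W where W: "W \<in> carrier_mat n n" and WW: "mat_adjoint W * W = 1\<^sub>m n" and Wu: "col W 0 = u"
    using unitary_completion[OF u' nu] by blast
  have WW': "W * mat_adjoint W = 1\<^sub>m n" by (rule unitary_right[OF W WW])
  have Wa: "mat_adjoint W \<in> carrier_mat n n" using W by simp
  have er: "cnj e = e"
  proof -
    have "e = (e \<cdot>\<^sub>v u) \<bullet>c u" using nu cprod_smult[OF u' u', of e 1] by simp
    also have "\<dots> = (A *\<^sub>v u) \<bullet>c u" using eig by simp
    also have "\<dots> = u \<bullet>c (A *\<^sub>v u)" using cprod_adj[OF A u' u'] Aadj by simp
    also have "\<dots> = u \<bullet>c (e \<cdot>\<^sub>v u)" using eig by simp
    also have "\<dots> = cnj e" using nu cprod_smult[OF u' u', of 1 e] by simp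
    finally show ?thesis by simp
  qed
  hence ere: "e = of_real (Re e)" by (metis Reals_cnj_iff complex_is_Real_iff of_real_Re)
  define A' where "A' = mat_adjoint W * A * W"
  have A': "A' \<in> carrier_mat n n" unfolding A'_def using W A Wa by (meson mult_carrier_mat)
  have A'adj: "mat_adjoint A' = A'"
  proof -
    have "mat_adjoint A' = mat_adjoint W * mat_adjoint (mat_adjoint W * A)"
      unfolding A'_def by (rule adj_mult[OF mult_carrier_mat[OF Wa A] W])
    also have "mat_adjoint (mat_adjoint W * A) = mat_adjoint A * W"
      by (subst adj_mult[OF Wa A], simp)
    finally show ?thesis unfolding Aadj A'_def using W A Wa by (simp add: assoc_mult_mat[OF Wa A W])
  qed
  have hA': "hermitian_mat n A'" unfolding hermitian_mat_def using A' A'adj by simp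
  have AW: "A * W = W * A'"
  proof -
    have "W * A' = (W * mat_adjoint W) * (A * W)" unfolding A'_def
      using W A Wa by (simp add: assoc_mult_mat[OF Wa A W] assoc_mult_mat[of W n n _ n _ n])
    also have "\<dots> = A * W" unfolding WW' using A W by simp
    finally show ?thesis by simp
  qed
  have col0: "A' $$ (i,0) = (if i = 0 then e else 0)" if i: "i < n" for i
  proof -
    have n0: "0 < n" unfolding n_def by simp
    have "A' = mat_adjoint W * (A * W)" unfolding A'_def by (rule assoc_mult_mat[OF Wa A W])
    hence "A' $$ (i,0) = row (mat_adjoint W) i \<bullet> col (A * W) 0" using i n0 W A by simp
    also have "col (A * W) 0 = A *\<^sub>v col W 0" by (rule col_mult2[OF A W n0])
    also have "\<dots> = e \<cdot>\<^sub>v col W 0" unfolding Wu eig ..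
    also have "row (mat_adjoint W) i \<bullet> (e \<cdot>\<^sub>v col W 0) = e * (row (mat_adjoint W) i \<bullet> col W 0)"
      using W Wa i by simp
    also have "row (mat_adjoint W) i \<bullet> col W 0 = (mat_adjoint W * W) $$ (i,0)" using i n0 W by simp
    also have "\<dots> = (if i = 0 then 1 else 0)" unfolding WW using i n0 by simp
    finally show ?thesis by simp
  qed
  have row0: "A' $$ (0,j) = (if j = 0 then e else 0)" if j: "j < n" for j
  proof -
    have "A' $$ (0,j) = cnj (A' $$ (j,0))" using hermitian_index[OF hA' _ j] unfolding n_def by simp
    thus ?thesis using col0[OF j] er by simp
  qed
  define A3 where "A3 = mat m m (\<lambda>(i,j). A' $$ (Suc i, Suc j))"
  have hA3: "hermitian_mat m A3" unfolding hermitian_mat_def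
  proof
    show A3: "A3 \<in> carrier_mat m m" unfolding A3_def by simp
    show "mat_adjoint A3 = A3"
    proof (rule eq_matI)
      fix i j assume "i < dim_row A3" "j < dim_col A3"
      hence i: "i < m" and j: "j < m" unfolding A3_def by auto
      have "mat_adjoint A3 $$ (i,j) = cnj (A' $$ (Suc j, Suc i))" using i j unfolding A3_def by (simp add: adj_index)
      also have "\<dots> = A' $$ (Suc i, Suc j)" using hermitian_index[OF hA', of "Suc i" "Suc j"] i j unfolding n_def by simp
      finally show "mat_adjoint A3 $$ (i,j) = A3 $$ (i,j)" using i j unfolding A3_def by simp
    qed (insert A3, auto)
  qed
  obtain V d3 where V: "V \<in> carrier_mat m m" and VV: "mat_adjoint V * V = 1\<^sub>m m" and AV: "A3 * V = V * dmat m d3"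
    using IH[OF hA3] by blast
  define V' where "V' = mat n n (\<lambda>(i,j). if i = 0 \<or> j = 0 then (if i = j then 1 else 0) else V $$ (i - 1, j - 1))"
  define d where "d = (\<lambda>i. if i = 0 then Re e else d3 (i - 1))"
  have V': "V' \<in> carrier_mat n n" unfolding V'_def by simp
  have V'i: "V' $$ (i,j) = (if i = 0 \<or> j = 0 then (if i = j then 1 else 0) else V $$ (i - 1, j - 1))"
    if "i < n" "j < n" for i j using that unfolding V'_def by simp
  have VV': "mat_adjoint V' * V' = 1\<^sub>m n"
  proof (rule eq_matI)
    fix i j assume "i < dim_row (1\<^sub>m n :: complex mat)" "j < dim_col (1\<^sub>m n :: complex mat)"
    hence i: "i < n" and j: "j < n" by auto
    have "(mat_adjoint V' * V') $$ (i,j) = (\<Sum>a<Suc m. mat_adjoint V' $$ (i,a) * V' $$ (a,j))"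
      using mult_index[OF adj_carrier[OF V'] V' i j] unfolding n_def .
    also have "\<dots> = (\<Sum>a<Suc m. cnj (V' $$ (a,i)) * V' $$ (a,j))"
      by (rule sum.cong[OF refl], insert V' i, auto simp: adj_index n_def)
    also have "\<dots> = cnj (V' $$ (0,i)) * V' $$ (0,j) + (\<Sum>a<m. cnj (V' $$ (Suc a,i)) * V' $$ (Suc a,j))"
      by (rule sum_shift)
    also have "\<dots> = 1\<^sub>m n $$ (i,j)"
    proof (cases i)
      case 0
      thus ?thesis using i j by (simp add: V'i n_def)
    next
      case (Suc i')
      note ii = this
      show ?thesis
      proof (cases j)
        case 0
        thus ?thesis using i j ii by (simp add: V'i n_def)
      next
        case (Suc j')
        have "(\<Sum>a<m. cnj (V' $$ (Suc a,i)) * V' $$ (Suc a,j)) = (\<Sum>a<m. mat_adjoint V $$ (i',a) * V $$ (a,j'))"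
          by (rule sum.cong[OF refl], insert i j ii Suc V, auto simp: V'i n_def adj_index)
        also have "\<dots> = (mat_adjoint V * V) $$ (i',j')"
          by (rule mult_index[symmetric, OF adj_carrier[OF V] V], insert i j ii Suc, auto simp: n_def)
        also have "\<dots> = (if i' = j' then 1 else 0)" unfolding VV using i j ii Suc by (simp add: n_def)
        finally show ?thesis using i j ii Suc by (simp add: V'i n_def)
      qed
    qed
    finally show "(mat_adjoint V' * V') $$ (i,j) = 1\<^sub>m n $$ (i,j)" .
  qed (insert V', auto)
  have AV': "A' * V' = V' * dmat n d"
  proof (rule eq_matI)
    fix i j assume "i < dim_row (V' * dmat n d)" "j < dim_col (V' * dmat n d)"
    hence i: "i < n" and j: "j < n" using V' by auto
    have "(A' * V') $$ (i,j) = (\<Sum>a<Suc m. A' $$ (i,a) * V' $$ (a,j))"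
      using mult_index[OF A' V' i j] unfolding n_def .
    also have "\<dots> = A' $$ (i,0) * V' $$ (0,j) + (\<Sum>a<m. A' $$ (i,Suc a) * V' $$ (Suc a,j))"
      by (rule sum_shift)
    also have "\<dots> = V' $$ (i,j) * d j"
    proof (cases j)
      case 0
      have "(\<Sum>a<m. A' $$ (i,Suc a) * V' $$ (Suc a,j)) = 0"
        by (rule sum.neutral, insert 0 j, auto simp: V'i n_def)
      thus ?thesis using 0 i j ere by (simp add: V'i col0 d_def n_def)
    next
      case (Suc j')
      note jj = this
      show ?thesis
      proof (cases i)
        case 0
        have "(\<Sum>a<m. A' $$ (i,Suc a) * V' $$ (Suc a,j)) = 0"
          by (rule sum.neutral, insert 0 i, auto simp: row0 n_def)
        thus ?thesis using 0 i j jj by (simp add: V'i n_def)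
      next
        case (Suc i')
        have "(\<Sum>a<m. A' $$ (i,Suc a) * V' $$ (Suc a,j)) = (\<Sum>a<m. A3 $$ (i',a) * V $$ (a,j'))"
          by (rule sum.cong[OF refl], insert i j jj Suc, auto simp: V'i n_def A3_def)
        also have "\<dots> = (A3 * V) $$ (i',j')"
          by (rule mult_index[symmetric, OF _ V], insert i j jj Suc, auto simp: n_def A3_def)
        also have "\<dots> = V $$ (i',j') * d3 j'" unfolding AV
          by (rule mult_dmat_index[OF V], insert i j jj Suc, auto simp: n_def)
        finally show ?thesis using i j jj Suc by (simp add: V'i n_def d_def)
      qed
    qed
    also have "\<dots> = (V' * dmat n d) $$ (i,j)" by (rule mult_dmat_index[symmetric, OF V' i j])
    finally show "(A' * V') $$ (i,j) = (V' * dmat n d) $$ (i,j)" .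
  qed (insert A' V', auto)
  define U where "U = W * V'"
  have U: "U \<in> carrier_mat n n" unfolding U_def using W V' by simp
  have UU: "mat_adjoint U * U = 1\<^sub>m n"
  proof -
    have V'a: "mat_adjoint V' \<in> carrier_mat n n" using V' by simp
    have WV': "W * V' \<in> carrier_mat n n" using W V' by simp
    have "mat_adjoint U * U = (mat_adjoint V' * mat_adjoint W) * (W * V')"
      unfolding U_def adj_mult[OF W V'] ..
    also have "\<dots> = mat_adjoint V' * (mat_adjoint W * (W * V'))" by (rule assoc_mult_mat[OF V'a Wa WV'])
    also have "mat_adjoint W * (W * V') = (mat_adjoint W * W) * V'" by (rule assoc_mult_mat[symmetric, OF Wa W V'])
    also have "\<dots> = V'" unfolding WW using V' by simp
    finally show ?thesis using VV' by simp
  qed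
  have AU: "A * U = U * dmat n d"
  proof -
    have "A * U = (A * W) * V'" unfolding U_def using A W V' by (simp add: assoc_mult_mat[of _ n n _ n _ n])
    also have "\<dots> = W * (A' * V')" unfolding AW using W A' V' by (simp add: assoc_mult_mat[of _ n n _ n _ n])
    also have "\<dots> = U * dmat n d" unfolding AV' U_def using W V' by (simp add: assoc_mult_mat[of _ n n _ n _ n])
    finally show ?thesis .
  qed
  have Ucol: "col U 0 = u"
  proof (rule eq_vecI)
    have n0: "0 < n" unfolding n_def by simp
    fix a assume "a < dim_vec u"
    hence a: "a < n" using u' by simp
    have "col U 0 $ a = U $$ (a,0)" using a n0 U by simp
    also have "\<dots> = (\<Sum>b<Suc m. W $$ (a,b) * V' $$ (b,0))"
      unfolding U_def using mult_index[OF W V' a n0] unfolding n_def .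
    also have "\<dots> = W $$ (a,0) * V' $$ (0,0) + (\<Sum>b<m. W $$ (a,Suc b) * V' $$ (Suc b,0))" by (rule sum_shift)
    also have "\<dots> = W $$ (a,0)" using n0 by (simp add: V'i n_def)
    also have "\<dots> = u $ a" unfolding Wu[symmetric] using a n0 W by simp
    finally show "col U 0 $ a = u $ a" .
  qed (insert U u', auto)
  show ?thesis using U UU AU Ucol unfolding n_def by blast
qed




lemma normalize_unit: fixes v :: "complex vec" assumes v: "v \<in> carrier_vec n" and v0: "v \<noteq> 0\<^sub>v n"
  shows "((of_real (1 / sqrt (Re (v \<bullet>c v))) :: complex) \<cdot>\<^sub>v v) \<bullet>c ((of_real (1 / sqrt (Re (v \<bullet>c v))) :: complex) \<cdot>\<^sub>v v) = 1"
proof -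
  define r where "r = Re (v \<bullet>c v)"
  have e: "v \<bullet>c v = of_real r" unfolding r_def by (rule cprod_self_Re[OF v])
  have r0: "r \<ge> 0" using cprod_self_nonneg[OF v] unfolding r_def .
  have "r \<noteq> 0" using cprod_self_zero[OF v] v0 unfolding r_def by auto
  hence r: "r > 0" using r0 by simp
  have s: "sqrt r * sqrt r = r" using r by simp
  have sp: "sqrt r > 0" using r by simp
  have "1 / sqrt r * (1 / sqrt r) * r = 1" using s sp by (simp add: field_simps)
  hence "of_real (1 / sqrt r) * of_real (1 / sqrt r) * of_real r = (1 :: complex)"
    by (metis of_real_1 of_real_mult)
  thus ?thesis unfolding cprod_smult[OF v v] e[symmetric] r_def[symmetric] by simp
qed

lemma exists_unit_eigen: fixes A :: "complex mat" assumes A: "A \<in> carrier_mat (Suc m) (Suc m)"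
  shows "\<exists>u e. u \<in> carrier_vec (Suc m) \<and> u \<bullet>c u = 1 \<and> A *\<^sub>v u = e \<cdot>\<^sub>v u"
proof -
  obtain as where cp: "char_poly A = (\<Prod>a\<leftarrow>as. [:- a, 1:])" and len: "length as = Suc m"
    using char_poly_factorized[OF A] by blast
  from len obtain e as' where as: "as = e # as'" by (cases as, auto)
  have "poly (char_poly A) e = 0" unfolding cp as by simp
  hence ev: "eigenvalue A e" using eigenvalue_root_char_poly[OF A] by simp
  define v where "v = find_eigenvector A e"
  have "eigenvector A v e" unfolding v_def by (rule find_eigenvector[OF A ev])
  hence v: "v \<in> carrier_vec (Suc m)" and v0: "v \<noteq> 0\<^sub>v (Suc m)" and Av: "A *\<^sub>v v = e \<cdot>\<^sub>v v"
    unfolding eigenvector_def using A by auto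
  define c where "c = (of_real (1 / sqrt (Re (v \<bullet>c v))) :: complex)"
  have "(c \<cdot>\<^sub>v v) \<bullet>c (c \<cdot>\<^sub>v v) = 1" unfolding c_def by (rule normalize_unit[OF v v0])
  moreover have "A *\<^sub>v (c \<cdot>\<^sub>v v) = e \<cdot>\<^sub>v (c \<cdot>\<^sub>v v)"
    unfolding mult_mat_vec[OF A v] Av by (auto simp: smult_smult_assoc mult.commute)
  moreover have "c \<cdot>\<^sub>v v \<in> carrier_vec (Suc m)" using v by simp
  ultimately show ?thesis by blast
qed

lemma spectral: fixes A :: "complex mat" assumes "hermitian_mat n A"
  shows "\<exists>U d. U \<in> carrier_mat n n \<and> mat_adjoint U * U = 1\<^sub>m n \<and> A * U = U * dmat n d"
  using assms
proof (induction n arbitrary: A)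
  case 0
  have A: "A \<in> carrier_mat 0 0" using 0 unfolding hermitian_mat_def by simp
  have "A * 1\<^sub>m 0 = 1\<^sub>m 0 * dmat 0 (\<lambda>_. 0)" by (rule eq_matI, insert A, auto)
  thus ?case by (intro exI[of _ "1\<^sub>m 0"] exI[of _ "\<lambda>_. 0"], simp)
next
  case (Suc m)
  have A: "A \<in> carrier_mat (Suc m) (Suc m)" using Suc.prems unfolding hermitian_mat_def by simp
  obtain u e where "u \<in> carrier_vec (Suc m)" "u \<bullet>c u = 1" "A *\<^sub>v u = e \<cdot>\<^sub>v u"
    using exists_unit_eigen[OF A] by blast
  from spectral_step[OF Suc.prems this Suc.IH] show ?case by blast
qed

lemma spectral_with: fixes A :: "complex mat" assumes h: "hermitian_mat n A"
  and u: "u \<in> carrier_vec n" and nu: "u \<bullet>c u = 1" and eig: "A *\<^sub>v u = e \<cdot>\<^sub>v u"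
  shows "\<exists>U d. U \<in> carrier_mat n n \<and> mat_adjoint U * U = 1\<^sub>m n \<and> A * U = U * dmat n d \<and> col U 0 = u"
proof (cases n)
  case 0
  hence "u \<bullet>c u = 0" using u by (simp add: cprod_def')
  thus ?thesis using nu by simp
next
  case (Suc m)
  show ?thesis using spectral_step[of m A u e] h u nu eig spectral[of m] unfolding Suc by blast
qed




definition unitary_mat :: "nat \<Rightarrow> complex mat \<Rightarrow> bool" where
  "unitary_mat n U \<longleftrightarrow> U \<in> carrier_mat n n \<and> mat_adjoint U * U = 1\<^sub>m n"

lemma unitaryD: assumes "unitary_mat n U"
  shows "U \<in> carrier_mat n n" "mat_adjoint U \<in> carrier_mat n n" "mat_adjoint U * U = 1\<^sub>m n" "U * mat_adjoint U = 1\<^sub>m n"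
  using assms unitary_right[of U n] unfolding unitary_mat_def by auto

lemma col_cprod: fixes U :: "complex mat" assumes U: "U \<in> carrier_mat n m" and i: "i < m" and j: "j < m"
  shows "(mat_adjoint U * U) $$ (i,j) = col U j \<bullet>c col U i"
proof -
  have ci: "col U i \<in> carrier_vec n" and cj: "col U j \<in> carrier_vec n" using U by auto
  have "(mat_adjoint U * U) $$ (i,j) = (\<Sum>a<n. mat_adjoint U $$ (i,a) * U $$ (a,j))"
    by (rule mult_index[OF adj_carrier[OF U] U i j])
  also have "\<dots> = (\<Sum>a<n. col U j $ a * cnj (col U i $ a))"
    by (rule sum.cong[OF refl], insert U i j, simp add: adj_index mult.commute)
  also have "\<dots> = col U j \<bullet>c col U i" by (rule cprod_def'[OF cj ci, symmetric])
  finally show ?thesis .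
qed

lemma unitary_col_unit: assumes U: "unitary_mat n U" and j: "j < n"
  shows "col U j \<bullet>c col U j = 1" "col U j \<in> carrier_vec n" "col U j \<noteq> 0\<^sub>v n"
proof -
  have "col U j \<bullet>c col U j = (mat_adjoint U * U) $$ (j,j)" using col_cprod[OF unitaryD(1)[OF U] j j] by simp
  thus c: "col U j \<bullet>c col U j = 1" unfolding unitaryD(3)[OF U] using j by simp
  show cc: "col U j \<in> carrier_vec n" using unitaryD(1)[OF U] by auto
  show "col U j \<noteq> 0\<^sub>v n" using c cc by auto
qed

lemma eig_col: assumes A: "A \<in> carrier_mat n n" and U: "U \<in> carrier_mat n n" and AU: "A * U = U * dmat n d"
  and j: "j < n" shows "A *\<^sub>v col U j = complex_of_real (d j) \<cdot>\<^sub>v col U j"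
proof (rule eq_vecI)
  fix a assume "a < dim_vec (complex_of_real (d j) \<cdot>\<^sub>v col U j)"
  hence a: "a < n" using U by simp
  have "(A *\<^sub>v col U j) $ a = col (A * U) j $ a" by (subst col_mult2[OF A U j], rule refl)
  also have "\<dots> = (U * dmat n d) $$ (a,j)" unfolding AU using U a j by simp
  also have "\<dots> = U $$ (a,j) * d j" by (rule mult_dmat_index[OF U a j])
  finally show "(A *\<^sub>v col U j) $ a = (complex_of_real (d j) \<cdot>\<^sub>v col U j) $ a" using U a j by simp
qed (insert A U, auto)

lemma diag_decomp: assumes A: "A \<in> carrier_mat n n" and U: "unitary_mat n U" and AU: "A * U = U * dmat n d"
  shows "A = U * dmat n d * mat_adjoint U" "mat_adjoint U * A * U = dmat n d"
proof -
  note u = unitaryD[OF U]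
  have "A = A * (U * mat_adjoint U)" unfolding u(4) using A by simp
  also have "\<dots> = (A * U) * mat_adjoint U" by (rule assoc_mult_mat[symmetric, OF A u(1) u(2)])
  finally show A': "A = U * dmat n d * mat_adjoint U" unfolding AU .
  have "mat_adjoint U * A * U = mat_adjoint U * (A * U)" by (rule assoc_mult_mat[OF u(2) A u(1)])
  also have "\<dots> = (mat_adjoint U * U) * dmat n d" unfolding AU by (rule assoc_mult_mat[symmetric, OF u(2) u(1) dmat_carrier])
  finally show "mat_adjoint U * A * U = dmat n d" unfolding u(3) by simp
qed




lemma quad_unitary: assumes U: "unitary_mat n U" and M: "M \<in> carrier_mat n n" and v: "v \<in> carrier_vec n"
  shows "(M *\<^sub>v v) \<bullet>c v = ((mat_adjoint U * M * U) *\<^sub>v (mat_adjoint U *\<^sub>v v)) \<bullet>c (mat_adjoint U *\<^sub>v v)"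
proof -
  note u = unitaryD[OF U]
  define w where "w = mat_adjoint U *\<^sub>v v"
  have w: "w \<in> carrier_vec n" unfolding w_def by (rule mult_mat_vec_carrier[OF u(2) v])
  have vw: "v = U *\<^sub>v w" unfolding w_def using u v by (simp add: assoc_mult_mat_vec[symmetric, OF u(1) u(2) v])
  have MU: "M * U \<in> carrier_mat n n" using M u by simp
  have "(M *\<^sub>v v) \<bullet>c v = ((M * U) *\<^sub>v w) \<bullet>c (U *\<^sub>v w)" unfolding vw using M u w by (simp only: assoc_mult_mat_vec)
  also have "\<dots> = (mat_adjoint U *\<^sub>v ((M * U) *\<^sub>v w)) \<bullet>c w"
  proof -
    have x: "(M * U) *\<^sub>v w \<in> carrier_vec n" by (rule mult_mat_vec_carrier[OF MU w])
    have Uw: "U *\<^sub>v w \<in> carrier_vec n" by (rule mult_mat_vec_carrier[OF u(1) w])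
    have y: "mat_adjoint U *\<^sub>v ((M * U) *\<^sub>v w) \<in> carrier_vec n" by (rule mult_mat_vec_carrier[OF u(2) x])
    have "((M * U) *\<^sub>v w) \<bullet>c (U *\<^sub>v w) = cnj ((U *\<^sub>v w) \<bullet>c ((M * U) *\<^sub>v w))" by (rule cprod_comm[OF x Uw])
    also have "(U *\<^sub>v w) \<bullet>c ((M * U) *\<^sub>v w) = w \<bullet>c (mat_adjoint U *\<^sub>v ((M * U) *\<^sub>v w))" by (rule cprod_adj[OF u(1) w x])
    also have "cnj (w \<bullet>c (mat_adjoint U *\<^sub>v ((M * U) *\<^sub>v w))) = (mat_adjoint U *\<^sub>v ((M * U) *\<^sub>v w)) \<bullet>c w"
      using cprod_comm[OF y w] by simp
    finally show ?thesis .
  qed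
  also have "mat_adjoint U *\<^sub>v ((M * U) *\<^sub>v w) = (mat_adjoint U * M * U) *\<^sub>v w"
    unfolding assoc_mult_mat[OF u(2) M u(1)] by (rule assoc_mult_mat_vec[symmetric, OF u(2) MU w])
  finally show ?thesis unfolding w_def .
qed

lemma quad_dmat: assumes w: "w \<in> carrier_vec n"
  shows "(dmat n d *\<^sub>v w) \<bullet>c w = of_real (\<Sum>i<n. d i * (cmod (w $ i))^2)"
proof -
  have dw: "dmat n d *\<^sub>v w \<in> carrier_vec n" by (rule mult_mat_vec_carrier[OF dmat_carrier w])
  have "(dmat n d *\<^sub>v w) \<bullet>c w = (\<Sum>i<n. (dmat n d *\<^sub>v w) $ i * cnj (w $ i))" by (rule cprod_def'[OF dw w])
  also have "\<dots> = (\<Sum>i<n. of_real (d i * (cmod (w $ i))^2))"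
  proof (rule sum.cong[OF refl])
    fix i assume "i \<in> {..<n}" hence i: "i < n" by simp
    have "(dmat n d *\<^sub>v w) $ i = (\<Sum>a<n. dmat n d $$ (i,a) * w $ a)" by (rule mult_vec_index[OF dmat_carrier w i])
    also have "\<dots> = (\<Sum>a<n. if a = i then of_real (d i) * w $ i else 0)"
      by (rule sum.cong[OF refl], insert i, auto simp: dmat_index)
    also have "\<dots> = of_real (d i) * w $ i" using i by simp
    finally have e: "(dmat n d *\<^sub>v w) $ i = of_real (d i) * w $ i" .
    have "w $ i * cnj (w $ i) = of_real ((cmod (w $ i))^2)" by (rule complex_norm_square[symmetric])
    thus "(dmat n d *\<^sub>v w) $ i * cnj (w $ i) = of_real (d i * (cmod (w $ i))^2)"
      unfolding e by (simp only: mult.assoc of_real_mult)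
  qed
  finally show ?thesis by simp
qed

lemma unitary_norm: assumes U: "unitary_mat n U" and v: "v \<in> carrier_vec n"
  shows "(mat_adjoint U *\<^sub>v v) \<bullet>c (mat_adjoint U *\<^sub>v v) = v \<bullet>c v"
proof -
  note u = unitaryD[OF U]
  have w: "mat_adjoint U *\<^sub>v v \<in> carrier_vec n" by (rule mult_mat_vec_carrier[OF u(2) v])
  have "(mat_adjoint U *\<^sub>v v) \<bullet>c (mat_adjoint U *\<^sub>v v) = v \<bullet>c (mat_adjoint (mat_adjoint U) *\<^sub>v (mat_adjoint U *\<^sub>v v))"
    by (rule cprod_adj[OF u(2) v w])
  also have "mat_adjoint (mat_adjoint U) *\<^sub>v (mat_adjoint U *\<^sub>v v) = v"
    using u v by (simp add: assoc_mult_mat_vec[symmetric, OF u(1) u(2) v])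
  finally show ?thesis .
qed

lemma mtrace_carrier: "A \<in> carrier_mat n n \<Longrightarrow> mtrace A = (\<Sum>i<n. A $$ (i,i))"
  unfolding mtrace_def by simp

lemma mtrace_comm: assumes A: "A \<in> carrier_mat n m" and B: "B \<in> carrier_mat m n"
  shows "mtrace (A * B) = mtrace (B * A)"
proof -
  have AB: "A * B \<in> carrier_mat n n" by (rule mult_carrier_mat[OF A B])
  have BA: "B * A \<in> carrier_mat m m" by (rule mult_carrier_mat[OF B A])
  have "mtrace (A * B) = (\<Sum>i<n. (A * B) $$ (i,i))" by (rule mtrace_carrier[OF AB])
  also have "\<dots> = (\<Sum>i<n. \<Sum>a<m. A $$ (i,a) * B $$ (a,i))" by (rule sum.cong[OF refl], rule mult_index[OF A B], auto)
  also have "\<dots> = (\<Sum>a<m. \<Sum>i<n. B $$ (a,i) * A $$ (i,a))" by (subst sum.swap, simp add: mult.commute)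
  also have "\<dots> = (\<Sum>a<m. (B * A) $$ (a,a))" by (rule sum.cong[OF refl], rule mult_index[OF B A, symmetric], auto)
  also have "\<dots> = mtrace (B * A)" by (rule mtrace_carrier[OF BA, symmetric])
  finally show ?thesis .
qed

lemma mtrace_dmat: "mtrace (dmat n d) = of_real (\<Sum>i<n. d i)"
  unfolding mtrace_def by (simp add: dmat_index)

lemma mtrace_unitary: assumes U: "unitary_mat n U" and M: "M \<in> carrier_mat n n"
  shows "mtrace (U * M * mat_adjoint U) = mtrace M"
proof -
  note u = unitaryD[OF U]
  have "mtrace (U * M * mat_adjoint U) = mtrace (mat_adjoint U * (U * M))"
    by (rule mtrace_comm, insert u M, auto)
  also have "mat_adjoint U * (U * M) = M" using u M by (simp add: assoc_mult_mat[symmetric, OF u(2) u(1) M])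
  finally show ?thesis .
qed




lemma dmat_mult: "dmat n a * dmat n b = dmat n (\<lambda>i. a i * b i)"
proof (rule eq_matI)
  fix i j assume "i < dim_row (dmat n (\<lambda>i. a i * b i))" "j < dim_col (dmat n (\<lambda>i. a i * b i))"
  hence i: "i < n" and j: "j < n" by auto
  show "(dmat n a * dmat n b) $$ (i, j) = dmat n (\<lambda>i. a i * b i) $$ (i, j)"
    unfolding mult_dmat_index[OF dmat_carrier i j] using i j by (simp add: dmat_index)
qed auto

lemma dmat_adj: "mat_adjoint (dmat n d) = dmat n d"
proof (rule eq_matI)
  fix i j assume "i < dim_row (dmat n d)" "j < dim_col (dmat n d)"
  hence i: "i < n" and j: "j < n" by auto
  show "mat_adjoint (dmat n d) $$ (i, j) = dmat n d $$ (i, j)"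
    using i j by (simp add: adj_index dmat_index)
qed auto

lemma conj_unitary_mult: assumes U: "unitary_mat n U" and A: "A \<in> carrier_mat n n" and B: "B \<in> carrier_mat n n"
  shows "(U * A * mat_adjoint U) * (U * B * mat_adjoint U) = U * (A * B) * mat_adjoint U"
proof -
  note u = unitaryD[OF U]
  have UA: "U * A \<in> carrier_mat n n" using u A by simp
  have UB: "U * B \<in> carrier_mat n n" using u B by simp
  have "(U * A * mat_adjoint U) * (U * B * mat_adjoint U) = (U * A) * (mat_adjoint U * ((U * B) * mat_adjoint U))"
    by (rule assoc_mult_mat[OF UA u(2) mult_carrier_mat[OF UB u(2)]])
  also have "mat_adjoint U * ((U * B) * mat_adjoint U) = B * mat_adjoint U"
    using u B by (simp add: assoc_mult_mat[symmetric, OF u(2) u(1) B] assoc_mult_mat[symmetric, OF u(2) UB u(2)])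
  also have "(U * A) * (B * mat_adjoint U) = U * (A * B) * mat_adjoint U"
    by (simp only: assoc_mult_mat[symmetric, OF UA B u(2)] assoc_mult_mat[OF u(1) A B])
  finally show ?thesis .
qed

lemma conj_unitary_adj: assumes U: "unitary_mat n U" and A: "A \<in> carrier_mat n n"
  shows "mat_adjoint (U * A * mat_adjoint U) = U * mat_adjoint A * mat_adjoint U"
proof -
  note u = unitaryD[OF U]
  have UA: "U * A \<in> carrier_mat n n" using u A by simp
  have "mat_adjoint (U * A * mat_adjoint U) = mat_adjoint (mat_adjoint U) * mat_adjoint (U * A)"
    by (rule adj_mult[OF UA u(2)])
  also have "mat_adjoint (U * A) = mat_adjoint A * mat_adjoint U" by (rule adj_mult[OF u(1) A])
  also have "mat_adjoint (mat_adjoint U) * (mat_adjoint A * mat_adjoint U) = U * mat_adjoint A * mat_adjoint U"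
    unfolding adj_adj by (rule assoc_mult_mat[symmetric, OF u(1) adj_carrier[OF A] u(2)])
  finally show ?thesis .
qed

lemma psd_sqrt_eig: assumes C: "psd_mat n C" and u: "u \<in> carrier_vec n" and s: "s \<ge> 0"
  and CCu: "(C * C) *\<^sub>v u = complex_of_real (s^2) \<cdot>\<^sub>v u"
  shows "C *\<^sub>v u = complex_of_real s \<cdot>\<^sub>v u"
proof -
  have Cc: "C \<in> carrier_mat n n" and Ca: "mat_adjoint C = C" and pos: "\<And>v. v \<in> carrier_vec n \<Longrightarrow> 0 \<le> Re ((C *\<^sub>v v) \<bullet>c v)"
    using C unfolding psd_mat_def hermitian_mat_def by auto
  have Cu: "C *\<^sub>v u \<in> carrier_vec n" by (rule mult_mat_vec_carrier[OF Cc u])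
  have CCu': "C *\<^sub>v (C *\<^sub>v u) = complex_of_real (s^2) \<cdot>\<^sub>v u"
    using CCu assoc_mult_mat_vec[OF Cc Cc u] by simp
  show ?thesis
  proof (cases "s = 0")
    case True
    have "(C *\<^sub>v u) \<bullet>c (C *\<^sub>v u) = u \<bullet>c (mat_adjoint C *\<^sub>v (C *\<^sub>v u))" by (rule cprod_adj[OF Cc u Cu])
    also have "\<dots> = 0" unfolding Ca CCu' True using u by (simp add: cprod_def')
    finally have "C *\<^sub>v u = 0\<^sub>v n" using cprod_self_zero[OF Cu] by simp
    thus ?thesis using True u by auto
  next
    case False
    hence sp: "s > 0" using s by simp
    define y where "y = C *\<^sub>v u - complex_of_real s \<cdot>\<^sub>v u"
    have y: "y \<in> carrier_vec n" unfolding y_def using Cu u by simp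
    have Cy: "C *\<^sub>v y = (- complex_of_real s) \<cdot>\<^sub>v y"
    proof (rule eq_vecI)
      fix a assume "a < dim_vec ((- complex_of_real s) \<cdot>\<^sub>v y)"
      hence a: "a < n" using y by simp
      have du: "dim_vec u = n" "dim_vec (C *\<^sub>v u) = n" using u Cu Cc by auto
      have "C *\<^sub>v y = C *\<^sub>v (C *\<^sub>v u) - C *\<^sub>v (complex_of_real s \<cdot>\<^sub>v u)"
        unfolding y_def by (rule mult_minus_distrib_mat_vec[OF Cc Cu], insert u, simp)
      also have "\<dots> = complex_of_real (s^2) \<cdot>\<^sub>v u - complex_of_real s \<cdot>\<^sub>v (C *\<^sub>v u)"
        unfolding CCu' mult_mat_vec[OF Cc u] ..
      finally have "(C *\<^sub>v y) $ a = complex_of_real (s^2) * u $ a - complex_of_real s * (C *\<^sub>v u) $ a"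
        using a du by (simp only: index_minus_vec index_smult_vec)
      also have "\<dots> = ((- complex_of_real s) \<cdot>\<^sub>v y) $ a"
        using a u Cu unfolding y_def by (simp add: algebra_simps power2_eq_square)
      finally show "(C *\<^sub>v y) $ a = ((- complex_of_real s) \<cdot>\<^sub>v y) $ a" .
    qed (insert Cc y, auto)
    have "(C *\<^sub>v y) \<bullet>c y = (- complex_of_real s) * (y \<bullet>c y)"
      unfolding Cy using cprod_smult[OF y y, of "- complex_of_real s" 1] by simp
    hence "Re ((C *\<^sub>v y) \<bullet>c y) = - s * Re (y \<bullet>c y)" by simp
    hence "s * Re (y \<bullet>c y) \<le> 0" using pos[OF y] by simp
    hence "Re (y \<bullet>c y) \<le> 0" using sp by (simp add: mult_le_0_iff)
    hence "Re (y \<bullet>c y) = 0" using cprod_self_nonneg[OF y] by simp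
    hence y0: "y = 0\<^sub>v n" by (rule cprod_self_zero[OF y])
    show ?thesis
    proof (rule eq_vecI)
      fix a assume "a < dim_vec (complex_of_real s \<cdot>\<^sub>v u)"
      hence a: "a < n" using u by simp
      have "y $ a = 0" using y0 a by simp
      thus "(C *\<^sub>v u) $ a = (complex_of_real s \<cdot>\<^sub>v u) $ a" using a u Cu unfolding y_def by simp
    qed (insert Cu u Cc, auto)
  qed
qed




lemma mult3_carrier: "A \<in> carrier_mat n n \<Longrightarrow> B \<in> carrier_mat n n \<Longrightarrow> C \<in> carrier_mat n n \<Longrightarrow> A * B * C \<in> carrier_mat n n"
  by (meson mult_carrier_mat)

lemma unitary_mult_cancel: assumes U: "unitary_mat n U" and E: "E \<in> carrier_mat n n"
  shows "U * E * mat_adjoint U * U = U * E"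
proof -
  note u = unitaryD[OF U]
  have UE: "U * E \<in> carrier_mat n n" using u E by simp
  have "U * E * mat_adjoint U * U = (U * E) * (mat_adjoint U * U)" by (rule assoc_mult_mat[OF UE u(2) u(1)])
  thus ?thesis unfolding u(3) using right_mult_one_mat[OF UE] by simp
qed

lemma abs_mat_diag: assumes X: "hermitian_mat n X" and U: "unitary_mat n U" and XU: "X * U = U * dmat n d"
  shows "abs_mat X = U * dmat n (\<lambda>i. \<bar>d i\<bar>) * mat_adjoint U"
proof -
  note u = unitaryD[OF U]
  have Xc: "X \<in> carrier_mat n n" and Xa: "mat_adjoint X = X" using X unfolding hermitian_mat_def by auto
  have dX: "dim_col X = n" using Xc by simp
  define E where "E = dmat n (\<lambda>i. \<bar>d i\<bar>)"
  have Ec: "E \<in> carrier_mat n n" unfolding E_def by simp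
  define B where "B = U * E * mat_adjoint U"
  have Bc: "B \<in> carrier_mat n n" unfolding B_def using u Ec by (intro mult3_carrier)
  have XD: "X = U * dmat n d * mat_adjoint U" by (rule diag_decomp(1)[OF Xc U XU])
  have BU: "B * U = U * E" unfolding B_def by (rule unitary_mult_cancel[OF U Ec])
  have psdB: "psd_mat n B" unfolding psd_mat_def hermitian_mat_def
  proof (intro conjI ballI)
    show "B \<in> carrier_mat n n" by (rule Bc)
    have "mat_adjoint B = U * mat_adjoint E * mat_adjoint U" unfolding B_def by (rule conj_unitary_adj[OF U Ec])
    thus "mat_adjoint B = B" unfolding B_def E_def dmat_adj .
    fix v :: "complex vec" assume v: "v \<in> carrier_vec n"
    have w: "mat_adjoint U *\<^sub>v v \<in> carrier_vec n" by (rule mult_mat_vec_carrier[OF u(2) v])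
    have "(B *\<^sub>v v) \<bullet>c v = (E *\<^sub>v (mat_adjoint U *\<^sub>v v)) \<bullet>c (mat_adjoint U *\<^sub>v v)"
      unfolding quad_unitary[OF U Bc v] diag_decomp(2)[OF Bc U BU[unfolded E_def]] E_def ..
    also have "\<dots> = of_real (\<Sum>i<n. \<bar>d i\<bar> * (cmod ((mat_adjoint U *\<^sub>v v) $ i))^2)"
      unfolding E_def by (rule quad_dmat[OF w])
    finally show "0 \<le> Re ((B *\<^sub>v v) \<bullet>c v)" by (simp add: sum_nonneg)
  qed
  have BB: "B * B = mat_adjoint X * X"
  proof -
    have "B * B = U * (E * E) * mat_adjoint U" unfolding B_def by (rule conj_unitary_mult[OF U Ec Ec])
    also have "E * E = dmat n d * dmat n d" unfolding E_def dmat_mult by (simp only: abs_mult_self)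
    also have "U * (dmat n d * dmat n d) * mat_adjoint U = X * X"
      unfolding XD by (rule conj_unitary_mult[symmetric, OF U dmat_carrier dmat_carrier])
    finally show ?thesis unfolding Xa .
  qed
  have uniq: "C = B" if C: "psd_mat (dim_col X) C \<and> C * C = mat_adjoint X * X" for C
  proof -
    have Cp: "psd_mat n C" and CC: "C * C = X * X" using C unfolding dX Xa by auto
    have Cc: "C \<in> carrier_mat n n" using Cp unfolding psd_mat_def hermitian_mat_def by auto
    have colC: "C *\<^sub>v col U j = B *\<^sub>v col U j" if j: "j < n" for j
    proof -
      have cj: "col U j \<in> carrier_vec n" using u(1) by auto
      have Xcj: "X *\<^sub>v col U j = of_real (d j) \<cdot>\<^sub>v col U j" by (rule eig_col[OF Xc u(1) XU j])
      have "(C * C) *\<^sub>v col U j = X *\<^sub>v (X *\<^sub>v col U j)" unfolding CC by (rule assoc_mult_mat_vec[OF Xc Xc cj])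
      also have "\<dots> = complex_of_real (\<bar>d j\<bar>^2) \<cdot>\<^sub>v col U j"
        unfolding Xcj mult_mat_vec[OF Xc cj] by (simp add: smult_smult_assoc power2_eq_square)
      finally have "C *\<^sub>v col U j = complex_of_real \<bar>d j\<bar> \<cdot>\<^sub>v col U j"
        by (intro psd_sqrt_eig[OF Cp cj], auto)
      also have "\<dots> = B *\<^sub>v col U j" using eig_col[OF Bc u(1) BU[unfolded E_def] j] by simp
      finally show ?thesis .
    qed
    have CU: "C * U = B * U"
    proof (rule eq_matI)
      fix a j assume "a < dim_row (B * U)" "j < dim_col (B * U)"
      hence a: "a < n" and j: "j < n" using Bc u(1) by auto
      have "(C * U) $$ (a,j) = col (C * U) j $ a" using a j Cc u(1) by simp
      also have "\<dots> = (C *\<^sub>v col U j) $ a" by (subst col_mult2[OF Cc u(1) j], rule refl)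
      also have "\<dots> = (B *\<^sub>v col U j) $ a" unfolding colC[OF j] ..
      also have "\<dots> = col (B * U) j $ a" by (subst col_mult2[OF Bc u(1) j], rule refl)
      also have "\<dots> = (B * U) $$ (a,j)" using a j Bc u(1) by simp
      finally show "(C * U) $$ (a,j) = (B * U) $$ (a,j)" .
    qed (insert Cc Bc u(1), auto)
    have "C = C * (U * mat_adjoint U)" unfolding u(4) using Cc by simp
    also have "\<dots> = (C * U) * mat_adjoint U" by (rule assoc_mult_mat[symmetric, OF Cc u(1) u(2)])
    also have "\<dots> = (B * U) * mat_adjoint U" unfolding CU ..
    also have "\<dots> = B * (U * mat_adjoint U)" by (rule assoc_mult_mat[OF Bc u(1) u(2)])
    also have "\<dots> = B" unfolding u(4) using Bc by simp
    finally show ?thesis .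
  qed
  have "abs_mat X = B" unfolding abs_mat_def
  proof (rule the_equality)
    show "psd_mat (dim_col X) B \<and> B * B = mat_adjoint X * X" unfolding dX using psdB BB by (rule conjI)
  next
    fix C assume "psd_mat (dim_col X) C \<and> C * C = mat_adjoint X * X"
    thus "C = B" by (rule uniq)
  qed
  thus ?thesis unfolding B_def E_def .
qed

lemma trace_norm_diag: assumes X: "hermitian_mat n X" and U: "unitary_mat n U" and XU: "X * U = U * dmat n d"
  shows "trace_norm X = (\<Sum>i<n. \<bar>d i\<bar>)"
  unfolding trace_norm_def abs_mat_diag[OF X U XU] mtrace_unitary[OF U dmat_carrier] mtrace_dmat by simp

lemma trace_diag: assumes X: "X \<in> carrier_mat n n" and U: "unitary_mat n U" and XU: "X * U = U * dmat n d"
  shows "mtrace X = of_real (\<Sum>i<n. d i)"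
  by (subst diag_decomp(1)[OF X U XU], unfold mtrace_unitary[OF U dmat_carrier] mtrace_dmat, rule refl)




lemma sq_carrier: "A \<in> carrier_mat n n \<Longrightarrow> B \<in> carrier_mat n n \<Longrightarrow> A * B \<in> carrier_mat n n"
  by (rule mult_carrier_mat)

lemma mp_unique: fixes A X Y :: "complex mat"
  assumes A: "A \<in> carrier_mat n n" and X: "X \<in> carrier_mat n n" and Y: "Y \<in> carrier_mat n n"
  and x1: "A * X * A = A" and x2: "X * A * X = X" and x3: "mat_adjoint (A * X) = A * X" and x4: "mat_adjoint (X * A) = X * A"
  and y1: "A * Y * A = A" and y2: "Y * A * Y = Y" and y3: "mat_adjoint (A * Y) = A * Y" and y4: "mat_adjoint (Y * A) = Y * A"
  shows "X = Y"
proof -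
  have Aa: "mat_adjoint A \<in> carrier_mat n n" and Xa: "mat_adjoint X \<in> carrier_mat n n" and Ya: "mat_adjoint Y \<in> carrier_mat n n"
    using A X Y by auto
  note c = A X Y Aa Xa Ya
  note as = assoc_mult_mat[of _ n n _ n _ n]
  have Aadj1: "mat_adjoint A = mat_adjoint A * (mat_adjoint Y * mat_adjoint A)"
  proof -
    have "mat_adjoint A = mat_adjoint (A * (Y * A))" using y1 c by (simp add: as sq_carrier)
    also have "\<dots> = mat_adjoint (Y * A) * mat_adjoint A" by (rule adj_mult[OF A sq_carrier[OF Y A]])
    also have "\<dots> = (mat_adjoint A * mat_adjoint Y) * mat_adjoint A" unfolding adj_mult[OF Y A] ..
    finally show ?thesis using c by (simp add: as sq_carrier)
  qed
  have Aadj2: "mat_adjoint A = mat_adjoint A * (mat_adjoint X * mat_adjoint A)"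
  proof -
    have "mat_adjoint A = mat_adjoint (A * (X * A))" using x1 c by (simp add: as sq_carrier)
    also have "\<dots> = mat_adjoint (X * A) * mat_adjoint A" by (rule adj_mult[OF A sq_carrier[OF X A]])
    also have "\<dots> = (mat_adjoint A * mat_adjoint X) * mat_adjoint A" unfolding adj_mult[OF X A] ..
    finally show ?thesis using c by (simp add: as sq_carrier)
  qed
  have ax: "mat_adjoint X * mat_adjoint A = A * X" using x3 adj_mult[OF A X] by simp
  have ay: "mat_adjoint Y * mat_adjoint A = A * Y" using y3 adj_mult[OF A Y] by simp
  have xa: "mat_adjoint A * mat_adjoint X = X * A" using x4 adj_mult[OF X A] by simp
  have ya: "mat_adjoint A * mat_adjoint Y = Y * A" using y4 adj_mult[OF Y A] by simp
  have eX: "X = X * (A * Y)"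
  proof -
    have "X = X * (A * X)" using x2 c by (simp add: as sq_carrier)
    also have "\<dots> = X * (mat_adjoint X * mat_adjoint A)" unfolding ax ..
    also have "\<dots> = X * (mat_adjoint X * (mat_adjoint A * (mat_adjoint Y * mat_adjoint A)))" using Aadj1 by simp
    also have "\<dots> = X * ((mat_adjoint X * mat_adjoint A) * (mat_adjoint Y * mat_adjoint A))" using c by (simp add: as sq_carrier)
    also have "\<dots> = X * ((A * X) * (A * Y))" unfolding ax ay ..
    also have "\<dots> = (X * A * X) * (A * Y)" using c by (simp add: as sq_carrier)
    also have "\<dots> = X * (A * Y)" unfolding x2 ..
    finally show ?thesis .
  qed
  have eY: "Y = X * (A * Y)"
  proof -
    have "Y = (Y * A) * Y" using y2 by simp
    also have "\<dots> = (mat_adjoint A * mat_adjoint Y) * Y" unfolding ya ..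
    also have "\<dots> = ((mat_adjoint A * (mat_adjoint X * mat_adjoint A)) * mat_adjoint Y) * Y" using Aadj2 by simp
    also have "\<dots> = ((mat_adjoint A * mat_adjoint X) * (mat_adjoint A * mat_adjoint Y)) * Y" using c by (simp add: as sq_carrier)
    also have "\<dots> = ((X * A) * (Y * A)) * Y" unfolding xa ya ..
    also have "\<dots> = X * (A * (Y * A * Y))" using c by (simp add: as sq_carrier)
    also have "\<dots> = X * (A * Y)" unfolding y2 ..
    finally show ?thesis .
  qed
  show ?thesis using eX eY by simp
qed




lemma supp_inv_diag: assumes S: "S \<in> carrier_mat n n" and U: "unitary_mat n U" and SU: "S * U = U * dmat n d"
  shows "supp_inv S = U * dmat n (\<lambda>i. inverse (d i)) * mat_adjoint U"
proof -
  note u = unitaryD[OF U]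
  define D where "D = dmat n d"
  define E where "E = dmat n (\<lambda>i. inverse (d i))"
  have Dc: "D \<in> carrier_mat n n" and Ec: "E \<in> carrier_mat n n" unfolding D_def E_def by auto
  define X where "X = U * E * mat_adjoint U"
  have Xc: "X \<in> carrier_mat n n" unfolding X_def by (rule mult3_carrier[OF u(1) Ec u(2)])
  have SD: "S = U * D * mat_adjoint U" unfolding D_def by (rule diag_decomp(1)[OF S U SU])
  have DE: "D * E = dmat n (\<lambda>i. d i * inverse (d i))" unfolding D_def E_def dmat_mult ..
  have ED: "E * D = dmat n (\<lambda>i. inverse (d i) * d i)" unfolding D_def E_def dmat_mult ..
  have DED: "D * E * D = D" unfolding DE unfolding D_def dmat_mult
    by (rule arg_cong[of _ _ "dmat n"], rule ext, case_tac "d i = 0", auto)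
  have EDE: "E * D * E = E" unfolding ED unfolding E_def dmat_mult
    by (rule arg_cong[of _ _ "dmat n"], rule ext, case_tac "d i = 0", auto)
  have SX: "S * X = U * (D * E) * mat_adjoint U" unfolding SD X_def by (rule conj_unitary_mult[OF U Dc Ec])
  have XS: "X * S = U * (E * D) * mat_adjoint U" unfolding SD X_def by (rule conj_unitary_mult[OF U Ec Dc])
  have DEc: "D * E \<in> carrier_mat n n" and EDc: "E * D \<in> carrier_mat n n" using Dc Ec by auto
  have SXS: "S * X * S = S" unfolding SX unfolding SD conj_unitary_mult[OF U DEc Dc] DED ..
  have XSX: "X * S * X = X" unfolding XS unfolding X_def conj_unitary_mult[OF U EDc Ec] EDE ..
  have SXa: "mat_adjoint (S * X) = S * X" unfolding SX conj_unitary_adj[OF U DEc] unfolding DE dmat_adj ..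
  have XSa: "mat_adjoint (X * S) = X * S" unfolding XS conj_unitary_adj[OF U EDc] unfolding ED dmat_adj ..
  have "supp_inv S = X" unfolding supp_inv_def
  proof (rule the_equality)
    show "X \<in> carrier_mat (dim_col S) (dim_row S) \<and> S * X * S = S \<and> X * S * X = X \<and>
      mat_adjoint (S * X) = S * X \<and> mat_adjoint (X * S) = X * S"
      using Xc S SXS XSX SXa XSa by simp
  next
    fix Y assume "Y \<in> carrier_mat (dim_col S) (dim_row S) \<and> S * Y * S = S \<and> Y * S * Y = Y \<and>
      mat_adjoint (S * Y) = S * Y \<and> mat_adjoint (Y * S) = Y * S"
    hence Y: "Y \<in> carrier_mat n n" and y: "S * Y * S = S" "Y * S * Y = Y" "mat_adjoint (S * Y) = S * Y" "mat_adjoint (Y * S) = Y * S"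
      using S by auto
    show "Y = X" by (rule mp_unique[OF S Y Xc y SXS XSX SXa XSa])
  qed
  thus ?thesis unfolding X_def E_def .
qed


lemma pair_ineq: fixes x y :: real assumes x: "0 < x" and y: "0 < y"
  shows "x + y \<le> y^2 / x + x^2 / y"
proof -
  have "x * y * (x + y) \<le> y^3 + x^3"
  proof -
    have "0 \<le> (x + y) * (x - y)^2" using x y by simp
    thus ?thesis by (simp add: power2_eq_square power3_eq_cube algebra_simps)
  qed
  hence "(x + y) \<le> (y^3 + x^3) / (x * y)" using x y by (simp add: field_simps mult.commute)
  also have "(y^3 + x^3) / (x * y) = y^2 / x + x^2 / y" using x y by (simp add: field_simps power2_eq_square power3_eq_cube)
  finally show ?thesis .
qed

lemma key_ineq: fixes a b e :: real
  assumes a: "0 < a" and b: "0 < b" and ab: "a + b \<le> 1" and ae: "1 - e/2 \<le> a" and e: "0 < e" and e2: "e < 2/3"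
  shows "2/e - 3 \<le> b^2 / a + a^2 / b - a - b"
proof -
  define c where "c = 1 - a"
  have bc: "b \<le> c" using ab unfolding c_def by simp
  have c0: "0 < c" using b bc by simp
  have ce: "2 * c \<le> e" using ae unfolding c_def by simp
  have c3: "c < 1/3" using ce e2 by simp
  have ca: "c < a" using c3 unfolding c_def by simp
  have "2/e - 3 \<le> 1/c - 3"
  proof -
    have "2/e \<le> 2/(2*c)" using ce c0 by (intro divide_left_mono, auto)
    thus ?thesis using c0 by simp
  qed
  also have "1/c - 3 \<le> b^2 / a + a^2 / b - a - b"
  proof -
    have g: "(a + c) * (a - c)^2 \<le> (a + b) * (a - b)^2"
    proof -
      have "(a + b) * (a - b)^2 - (a + c) * (a - c)^2 = (c - b) * (a^2 + a*(b+c) - (b^2 + b*c + c^2))"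
        by (simp add: power2_eq_square algebra_simps)
      moreover have "0 \<le> (c - b) * (a^2 + a*(b+c) - (b^2 + b*c + c^2))"
      proof (rule mult_nonneg_nonneg)
        show "0 \<le> c - b" using bc by simp
        have "c^2 \<le> a^2" using ca c0 by (simp add: power_mono)
        moreover have "b^2 \<le> a * b" using b bc ca by (simp add: power2_eq_square)
        moreover have "b * c \<le> a * c" using b bc ca c0 by simp
        ultimately show "0 \<le> a^2 + a*(b+c) - (b^2 + b*c + c^2)" by (simp add: algebra_simps)
      qed
      ultimately show ?thesis by simp
    qed
    have h: "(1 - 3*c) * a * b \<le> (1 - 3*c) * a * c" using c3 a bc by (intro mult_left_mono, auto)
    have k: "(1 - 3*c) * a * c \<le> (a + c) * (a - c)^2 * c"
    proof -
      have "(a + c) * (a - c)^2 * c - (1 - 3*c) * a * c = c^3" unfolding c_def by (simp add: power2_eq_square power3_eq_cube algebra_simps)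
      moreover have "0 \<le> c^3" using c0 by simp
      ultimately show ?thesis by linarith
    qed
    have main: "(1 - 3*c) * a * b \<le> (a + b) * (a - b)^2 * c"
      using h k g c0 by (meson mult_right_mono less_imp_le order_trans)
    have "1/c - 3 = (1 - 3*c) / c" using c0 by (simp add: field_simps)
    also have "\<dots> \<le> (a + b) * (a - b)^2 / (a * b)"
      using main a b c0 by (simp add: divide_simps mult.commute mult.left_commute)
    also have "(a + b) * (a - b)^2 / (a * b) = b^2 / a + a^2 / b - a - b"
      using a b by (simp add: field_simps power2_eq_square)
    finally show ?thesis .
  qed
  finally show ?thesis .
qed


lemma real_main:
  fixes p :: "nat \<Rightarrow> real" and a :: "nat \<Rightarrow> nat \<Rightarrow> real" and e :: real
  assumes n: "0 < n" and pn: "\<And>i. i < n \<Longrightarrow> 0 \<le> p i" and ps: "(\<Sum>i<n. p i) = 1" and pl: "1 - e/2 \<le> p 0" and e: "0 < e"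
  and an: "\<And>i j. i < n \<Longrightarrow> j < n \<Longrightarrow> 0 \<le> a i j" and asym: "\<And>i j. i < n \<Longrightarrow> j < n \<Longrightarrow> a i j = a j i"
  and supp: "\<And>k j. k < n \<Longrightarrow> j < n \<Longrightarrow> p k = 0 \<Longrightarrow> p j * a k j = 0"
  shows "((\<Sum>j<n. a 0 j) - a 0 0) * (2/e - 3) \<le> (\<Sum>i<n. \<Sum>j<n. inverse (p i) * (p j)^2 * a i j) - (\<Sum>i<n. \<Sum>j<n. p i * a i j)"
proof -
  define T where "T i j = inverse (p i) * (p j)^2 * a i j - p j * a i j" for i j
  define S where "S i j = T i j + T j i" for i j
  obtain m where m: "n = Suc m" using n by (cases n, auto)
  have swp: "(\<Sum>i<n. \<Sum>j<n. p i * a i j) = (\<Sum>i<n. \<Sum>j<n. p j * a i j)"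
  proof -
    have "(\<Sum>i<n. \<Sum>j<n. p i * a i j) = (\<Sum>j<n. \<Sum>i<n. p i * a i j)" by (rule sum.swap)
    also have "\<dots> = (\<Sum>j<n. \<Sum>i<n. p i * a j i)" by (rule sum.cong[OF refl], rule sum.cong[OF refl], simp add: asym)
    finally show ?thesis .
  qed
  have LT: "(\<Sum>i<n. \<Sum>j<n. inverse (p i) * (p j)^2 * a i j) - (\<Sum>i<n. \<Sum>j<n. p i * a i j) = (\<Sum>i<n. \<Sum>j<n. T i j)"
    unfolding swp T_def by (simp add: sum_subtractf)
  have TS: "2 * (\<Sum>i<n. \<Sum>j<n. T i j) = (\<Sum>i<n. \<Sum>j<n. S i j)"
  proof -
    have "(\<Sum>i<n. \<Sum>j<n. T j i) = (\<Sum>i<n. \<Sum>j<n. T i j)" by (rule sum.swap)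
    thus ?thesis unfolding S_def by (simp add: sum.distrib)
  qed
  have Tzero: "T i j = 0" if "i < n" "j < n" "p i = 0 \<or> p j = 0" for i j
    using that supp[of i j] unfolding T_def by auto
  have Snn: "0 \<le> S i j" if i: "i < n" and j: "j < n" for i j
  proof (cases "p i = 0 \<or> p j = 0")
    case True
    thus ?thesis unfolding S_def using Tzero[OF i j] Tzero[OF j i] True by auto
  next
    case False
    hence pi: "0 < p i" and pj: "0 < p j" using pn[OF i] pn[OF j] by auto
    have "S i j = ((p j)^2 / p i + (p i)^2 / p j - p j - p i) * a i j"
      unfolding S_def T_def using asym[OF i j] by (simp add: field_simps)
    moreover have "0 \<le> (p j)^2 / p i + (p i)^2 / p j - p j - p i" using pair_ineq[OF pi pj] by simp
    ultimately show ?thesis using an[OF i j] by simp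
  qed
  have S00: "S 0 0 = 0" unfolding S_def T_def by (cases "p 0 = 0", auto simp: power2_eq_square)
  have low: "(\<Sum>j<m. S 0 (Suc j)) \<le> (\<Sum>i<n. \<Sum>j<n. T i j)"
  proof -
    have "(\<Sum>i<n. \<Sum>j<n. S i j) = (\<Sum>j<n. S 0 j) + (\<Sum>i<m. \<Sum>j<n. S (Suc i) j)"
      unfolding m by (rule sum_shift)
    also have "(\<Sum>j<n. S 0 j) = (\<Sum>j<m. S 0 (Suc j))" unfolding m sum_shift S00 by simp
    finally have e1: "(\<Sum>i<n. \<Sum>j<n. S i j) = (\<Sum>j<m. S 0 (Suc j)) + (\<Sum>i<m. \<Sum>j<n. S (Suc i) j)" .
    have "(\<Sum>i<m. S (Suc i) 0) \<le> (\<Sum>i<m. \<Sum>j<n. S (Suc i) j)"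
    proof (rule sum_mono)
      fix i assume "i \<in> {..<m}" hence i: "Suc i < n" using m by simp
      show "S (Suc i) 0 \<le> (\<Sum>j<n. S (Suc i) j)"
        by (rule member_le_sum[of 0 "{..<n}" "S (Suc i)", simplified], insert n i Snn, auto)
    qed
    moreover have "(\<Sum>i<m. S (Suc i) 0) = (\<Sum>j<m. S 0 (Suc j))" unfolding S_def by (simp add: add.commute)
    ultimately have "2 * (\<Sum>j<m. S 0 (Suc j)) \<le> (\<Sum>i<n. \<Sum>j<n. S i j)" unfolding e1 by simp
    thus ?thesis unfolding TS[symmetric] by simp
  qed
  have rhs: "(\<Sum>j<n. a 0 j) - a 0 0 = (\<Sum>j<m. a 0 (Suc j))" unfolding m sum_shift by simp
  have goal: "(\<Sum>j<m. a 0 (Suc j)) * (2/e - 3) \<le> (\<Sum>j<m. S 0 (Suc j))"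
  proof (cases "2/e - 3 \<le> 0")
    case True
    have "(\<Sum>j<m. a 0 (Suc j)) * (2/e - 3) \<le> 0"
      using True by (intro mult_nonneg_nonpos sum_nonneg, insert an m, auto)
    also have "0 \<le> (\<Sum>j<m. S 0 (Suc j))" by (rule sum_nonneg, insert Snn m, auto)
    finally show ?thesis .
  next
    case False
    hence e2: "e < 2/3" using e by (simp add: field_simps)
    have p0: "0 < p 0" using pl e2 by simp
    have "(\<Sum>j<m. a 0 (Suc j)) * (2/e - 3) = (\<Sum>j<m. (2/e - 3) * a 0 (Suc j))" by (simp add: sum_distrib_right mult.commute)
    also have "\<dots> \<le> (\<Sum>j<m. S 0 (Suc j))"
    proof (rule sum_mono)
      fix j assume "j \<in> {..<m}" hence J: "Suc j < n" using m by simp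
      show "(2/e - 3) * a 0 (Suc j) \<le> S 0 (Suc j)"
      proof (cases "p (Suc j) = 0")
        case True
        have "p 0 * a (Suc j) 0 = 0" by (rule supp[OF J n True])
        hence "a (Suc j) 0 = 0" using p0 by simp
        hence a0: "a 0 (Suc j) = 0" using asym[OF n J] by simp
        have "S 0 (Suc j) = 0" unfolding S_def using Tzero[OF n J] Tzero[OF J n] True by simp
        thus ?thesis using a0 by simp
      next
        case False
        hence pj: "0 < p (Suc j)" using pn[OF J] by simp
        have sum2: "p 0 + p (Suc j) \<le> 1"
        proof -
          have "(\<Sum>i\<in>{0, Suc j}. p i) \<le> (\<Sum>i<n. p i)" by (rule sum_mono2, insert J n pn, auto)
          thus ?thesis using ps by simp
        qed
        have S: "S 0 (Suc j) = ((p (Suc j))^2 / p 0 + (p 0)^2 / p (Suc j) - p (Suc j) - p 0) * a 0 (Suc j)"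
          unfolding S_def T_def using asym[OF n J] p0 pj by (simp add: field_simps)
        have "2/e - 3 \<le> (p (Suc j))^2 / p 0 + (p 0)^2 / p (Suc j) - p 0 - p (Suc j)"
          by (rule key_ineq[OF p0 pj sum2 pl e e2])
        hence "(2/e - 3) * a 0 (Suc j) \<le> ((p (Suc j))^2 / p 0 + (p 0)^2 / p (Suc j) - p (Suc j) - p 0) * a 0 (Suc j)"
          using an[OF n J] by (intro mult_right_mono, auto)
        thus ?thesis unfolding S .
      qed
    qed
    finally show ?thesis .
  qed
  show ?thesis unfolding LT rhs using goal low by linarith
qed




lemma ket_bra_carrier: "\<psi> \<in> carrier_vec n \<Longrightarrow> ket_bra \<psi> \<in> carrier_mat n n"
  unfolding ket_bra_def by auto

lemma ket_bra_index: "\<psi> \<in> carrier_vec n \<Longrightarrow> i < n \<Longrightarrow> j < n \<Longrightarrow> ket_bra \<psi> $$ (i,j) = \<psi> $ i * cnj (\<psi> $ j)"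
  unfolding ket_bra_def by auto

lemma ket_bra_adj: assumes p: "\<psi> \<in> carrier_vec n" shows "mat_adjoint (ket_bra \<psi>) = ket_bra \<psi>"
proof (rule eq_matI)
  have K: "ket_bra \<psi> \<in> carrier_mat n n" by (rule ket_bra_carrier[OF p])
  fix i j assume "i < dim_row (ket_bra \<psi>)" "j < dim_col (ket_bra \<psi>)"
  hence i: "i < n" and j: "j < n" using K by auto
  show "mat_adjoint (ket_bra \<psi>) $$ (i, j) = ket_bra \<psi> $$ (i, j)"
    using i j K by (simp add: adj_index ket_bra_index[OF p] mult.commute)
qed (insert ket_bra_carrier[OF assms], auto)

lemma ket_bra_trace: assumes p: "\<psi> \<in> carrier_vec n" shows "mtrace (ket_bra \<psi>) = \<psi> \<bullet>c \<psi>"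
  unfolding mtrace_carrier[OF ket_bra_carrier[OF p]] cprod_def'[OF p p]
  by (rule sum.cong[OF refl], simp add: ket_bra_index[OF p])

lemma ket_bra_quad: assumes p: "\<psi> \<in> carrier_vec n" and v: "v \<in> carrier_vec n"
  shows "(ket_bra \<psi> *\<^sub>v v) \<bullet>c v = of_real ((cmod (v \<bullet>c \<psi>))^2)"
proof -
  have K: "ket_bra \<psi> \<in> carrier_mat n n" by (rule ket_bra_carrier[OF p])
  have Kv: "ket_bra \<psi> *\<^sub>v v \<in> carrier_vec n" by (rule mult_mat_vec_carrier[OF K v])
  have e: "(ket_bra \<psi> *\<^sub>v v) $ i = \<psi> $ i * (v \<bullet>c \<psi>)" if i: "i < n" for i
  proof -
    have "(ket_bra \<psi> *\<^sub>v v) $ i = (\<Sum>a<n. ket_bra \<psi> $$ (i,a) * v $ a)" by (rule mult_vec_index[OF K v i])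
    also have "\<dots> = (\<Sum>a<n. \<psi> $ i * (v $ a * cnj (\<psi> $ a)))" 
      by (rule sum.cong[OF refl], simp add: ket_bra_index[OF p i] mult_ac)
    also have "\<dots> = \<psi> $ i * (v \<bullet>c \<psi>)" unfolding cprod_def'[OF v p] sum_distrib_left ..
    finally show ?thesis .
  qed
  have "(ket_bra \<psi> *\<^sub>v v) \<bullet>c v = (\<Sum>i<n. (ket_bra \<psi> *\<^sub>v v) $ i * cnj (v $ i))" by (rule cprod_def'[OF Kv v])
  also have "\<dots> = (\<Sum>i<n. (v \<bullet>c \<psi>) * (\<psi> $ i * cnj (v $ i)))" by (rule sum.cong[OF refl], simp add: e mult_ac)
  also have "\<dots> = (v \<bullet>c \<psi>) * (\<psi> \<bullet>c v)" unfolding cprod_def'[OF p v] sum_distrib_left ..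
  also have "\<psi> \<bullet>c v = cnj (v \<bullet>c \<psi>)" by (rule cprod_comm[OF p v])
  also have "(v \<bullet>c \<psi>) * cnj (v \<bullet>c \<psi>) = of_real ((cmod (v \<bullet>c \<psi>))^2)" by (rule complex_norm_square[symmetric])
  finally show ?thesis .
qed

lemma mtrace_minus: assumes "A \<in> carrier_mat n n" "B \<in> carrier_mat n n"
  shows "mtrace (A - B) = mtrace A - mtrace B"
proof -
  have AB: "A - B \<in> carrier_mat n n" by (rule minus_carrier_mat[OF assms(2)])
  show ?thesis unfolding mtrace_carrier[OF AB] mtrace_carrier[OF assms(1)] mtrace_carrier[OF assms(2)] sum_subtractf[symmetric]
    by (rule sum.cong[OF refl], insert assms, auto)
qed

lemma cprod_minus: fixes a b v :: "complex vec" assumes "a \<in> carrier_vec n" "b \<in> carrier_vec n" "v \<in> carrier_vec n"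
  shows "(a - b) \<bullet>c v = a \<bullet>c v - b \<bullet>c v"
proof -
  have ab: "a - b \<in> carrier_vec n" using assms by simp
  show ?thesis unfolding cprod_def'[OF ab assms(3)] cprod_def'[OF assms(1,3)] cprod_def'[OF assms(2,3)]
    using assms by (simp add: sum_subtractf algebra_simps)
qed

lemma col_quad: fixes U M :: "complex mat" assumes U: "U \<in> carrier_mat n n" and M: "M \<in> carrier_mat n n" and k: "k < n"
  shows "(mat_adjoint U * M * U) $$ (k,k) = (M *\<^sub>v col U k) \<bullet>c col U k"
proof -
  have MU: "M * U \<in> carrier_mat n n" using M U by simp
  have ck: "col U k \<in> carrier_vec n" using U by auto
  have Mc: "M *\<^sub>v col U k \<in> carrier_vec n" by (rule mult_mat_vec_carrier[OF M ck])
  have "(mat_adjoint U * M * U) $$ (k,k) = (mat_adjoint U * (M * U)) $$ (k,k)"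
    unfolding assoc_mult_mat[OF adj_carrier[OF U] M U] ..
  also have "\<dots> = (\<Sum>a<n. mat_adjoint U $$ (k,a) * (M * U) $$ (a,k))" by (rule mult_index[OF adj_carrier[OF U] MU k k])
  also have "\<dots> = (\<Sum>a<n. (M *\<^sub>v col U k) $ a * cnj (col U k $ a))"
  proof (rule sum.cong[OF refl])
    fix a assume "a \<in> {..<n}" hence a: "a < n" by simp
    have "(M * U) $$ (a,k) = col (M * U) k $ a" by (rule index_col[symmetric], insert a k MU, auto)
    also have "\<dots> = (M *\<^sub>v col U k) $ a" by (subst col_mult2[OF M U k], rule refl)
    finally show "mat_adjoint U $$ (k,a) * (M * U) $$ (a,k) = (M *\<^sub>v col U k) $ a * cnj (col U k $ a)"
      using a k U by (simp add: adj_index mult.commute)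
  qed
  also have "\<dots> = (M *\<^sub>v col U k) \<bullet>c col U k" by (rule cprod_def'[OF Mc ck, symmetric])
  finally show ?thesis .
qed

lemma conj_back: assumes U: "unitary_mat n U" and M: "M \<in> carrier_mat n n"
  shows "mat_adjoint U * (U * M * mat_adjoint U) * U = M"
proof -
  note u = unitaryD[OF U]
  have "U * M * mat_adjoint U * U = U * M" by (rule unitary_mult_cancel[OF U M])
  have "mat_adjoint U * (U * M * mat_adjoint U) * U = mat_adjoint U * (U * M * mat_adjoint U * U)"
    by (rule assoc_mult_mat[OF u(2) mult3_carrier[OF u(1) M u(2)] u(1)])
  also have "U * M * mat_adjoint U * U = U * M" by (rule unitary_mult_cancel[OF U M])
  also have "mat_adjoint U * (U * M) = (mat_adjoint U * U) * M" by (rule assoc_mult_mat[symmetric, OF u(2) u(1) M])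
  also have "\<dots> = M" unfolding u(3) using M by simp
  finally show ?thesis .
qed

lemma conj_fwd: assumes U: "unitary_mat n U" and M: "M \<in> carrier_mat n n"
  shows "U * (mat_adjoint U * M * U) * mat_adjoint U = M"
proof -
  note u = unitaryD[OF U]
  have UM: "mat_adjoint U * M \<in> carrier_mat n n" by (rule mult_carrier_mat[OF u(2) M])
  have "U * (mat_adjoint U * M * U) * mat_adjoint U = U * ((mat_adjoint U * M * U) * mat_adjoint U)"
    by (rule assoc_mult_mat[OF u(1) mult3_carrier[OF u(2) M u(1)] u(2)])
  also have "(mat_adjoint U * M * U) * mat_adjoint U = (mat_adjoint U * M) * (U * mat_adjoint U)"
    by (rule assoc_mult_mat[OF UM u(1) u(2)])
  also have "\<dots> = mat_adjoint U * M" unfolding u(4) by (rule right_mult_one_mat[OF UM])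
  also have "U * (mat_adjoint U * M) = (U * mat_adjoint U) * M" by (rule assoc_mult_mat[symmetric, OF u(1) u(2) M])
  also have "\<dots> = M" unfolding u(4) using M by simp
  finally show ?thesis .
qed

lemma half_bound: fixes l c :: "nat \<Rightarrow> real"
  assumes ls: "(\<Sum>i<n. l i) = 0" and cn: "\<And>i. i < n \<Longrightarrow> 0 \<le> c i" and cs: "(\<Sum>i<n. c i) = 1"
  shows "\<bar>\<Sum>i<n. l i * c i\<bar> \<le> (\<Sum>i<n. \<bar>l i\<bar>) / 2"
proof -
  have c1: "c i \<le> 1" if i: "i < n" for i
  proof -
    have "c i \<le> (\<Sum>i<n. c i)" by (rule member_le_sum, insert i cn, auto)
    thus ?thesis using cs by simp
  qed
  have up: "(\<Sum>i<n. l i * c i) \<le> (\<Sum>i<n. max (l i) 0)"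
  proof (rule sum_mono)
    fix i assume "i \<in> {..<n}" hence i: "i < n" by simp
    show "l i * c i \<le> max (l i) 0"
    proof (cases "l i \<ge> 0")
      case True thus ?thesis using c1[OF i] by (simp add: mult_left_le)
    next
      case False thus ?thesis using cn[OF i] by (simp add: mult_nonpos_nonneg)
    qed
  qed
  have lo: "(\<Sum>i<n. - max (- l i) 0) \<le> (\<Sum>i<n. l i * c i)"
  proof (rule sum_mono)
    fix i assume "i \<in> {..<n}" hence i: "i < n" by simp
    show "- max (- l i) 0 \<le> l i * c i"
    proof (cases "l i \<ge> 0")
      case True thus ?thesis using cn[OF i] by simp
    next
      case False
      have "- l i * c i \<le> - l i" using c1[OF i] False by (simp add: mult_left_le)
      thus ?thesis using False by simp
    qed
  qed
  have mx1: "max x 0 = (\<bar>x\<bar> + x) / 2" for x :: real by auto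
  have mx2: "max (- x) 0 = (\<bar>x\<bar> - x) / 2" for x :: real by auto
  have m1: "(\<Sum>i<n. max (l i) 0) = ((\<Sum>i<n. \<bar>l i\<bar>) + (\<Sum>i<n. l i)) / 2"
    unfolding mx1 sum_divide_distrib[symmetric] sum.distrib ..
  have m2: "(\<Sum>i<n. - max (- l i) 0) = - (((\<Sum>i<n. \<bar>l i\<bar>) - (\<Sum>i<n. l i)) / 2)"
    unfolding mx2 sum_negf sum_divide_distrib[symmetric] sum_subtractf ..
  have "(\<Sum>i<n. l i * c i) \<le> (\<Sum>i<n. \<bar>l i\<bar>) / 2" using up unfolding m1 ls by simp
  moreover have "- ((\<Sum>i<n. \<bar>l i\<bar>) / 2) \<le> (\<Sum>i<n. l i * c i)" using lo unfolding m2 ls by simp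
  ultimately show ?thesis by (simp add: abs_le_iff)
qed




lemma partAB:
  fixes n :: nat and \<psi> \<phi> :: "complex vec" and \<sigma> :: "complex mat"
    and \<epsilon> :: real and l :: complex
  assumes psi: "unit_state n \<psi>"
    and sigma: "density_op n \<sigma>"
    and eps: "0 < \<epsilon>"
    and close: "trace_norm (ket_bra \<psi> - \<sigma>) \<le> \<epsilon>"
    and phi: "unit_state n \<phi>" "eigenvector \<sigma> \<phi> l"
    and largest: "\<And>\<mu> w. eigenvector \<sigma> w \<mu> \<Longrightarrow> Re \<mu> \<le> Re l"
    and U: "unitary_mat n U" and sU: "\<sigma> * U = U * dmat n p" and U0: "col U 0 = \<phi>"
  shows "(cmod (\<phi> \<bullet>c \<psi>))^2 \<ge> 1 - \<epsilon>" "1 - \<epsilon>/2 \<le> Re l" "l = of_real (p 0)"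
    "\<And>i. i < n \<Longrightarrow> 0 \<le> p i" "(\<Sum>i<n. p i) = 1" "0 < n"
proof -
  have psi_c: "\<psi> \<in> carrier_vec n" and psi1: "\<psi> \<bullet>c \<psi> = 1" using psi unfolding unit_state_def by auto
  have phi_c: "\<phi> \<in> carrier_vec n" and phi1: "\<phi> \<bullet>c \<phi> = 1" using phi(1) unfolding unit_state_def by auto
  have sig_p: "psd_mat n \<sigma>" and tr1: "mtrace \<sigma> = 1" using sigma unfolding density_op_def by auto
  have sig_h: "hermitian_mat n \<sigma>" using sig_p unfolding psd_mat_def by auto
  have sig_c: "\<sigma> \<in> carrier_mat n n" and sig_a: "mat_adjoint \<sigma> = \<sigma>" using sig_h unfolding hermitian_mat_def by auto
  have sig_pos: "\<And>v. v \<in> carrier_vec n \<Longrightarrow> 0 \<le> Re ((\<sigma> *\<^sub>v v) \<bullet>c v)" using sig_p unfolding psd_mat_def by auto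
  have phi_eig: "\<sigma> *\<^sub>v \<phi> = l \<cdot>\<^sub>v \<phi>" using phi(2) unfolding eigenvector_def by auto
  note u = unitaryD[OF U]
  show n0: "0 < n"
  proof (rule ccontr)
    assume "\<not> 0 < n" hence "n = 0" by simp
    hence "\<phi> \<bullet>c \<phi> = 0" using phi_c by (simp add: cprod_def')
    thus False using phi1 by simp
  qed
  have ucol: "col U i \<in> carrier_vec n" "col U i \<bullet>c col U i = 1" "col U i \<noteq> 0\<^sub>v n" if "i < n" for i
    using unitary_col_unit[OF U that] by auto
  have peig: "\<sigma> *\<^sub>v col U i = complex_of_real (p i) \<cdot>\<^sub>v col U i" if "i < n" for i
    by (rule eig_col[OF sig_c u(1) sU that])
  have pval: "(\<sigma> *\<^sub>v col U i) \<bullet>c col U i = complex_of_real (p i)" if i: "i < n" for i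
    using cprod_smult[OF ucol(1)[OF i] ucol(1)[OF i], of "complex_of_real (p i)" 1] peig[OF i] ucol(2)[OF i] by simp
  show pn: "0 \<le> p i" if i: "i < n" for i using sig_pos[OF ucol(1)[OF i]] pval[OF i] by simp
  have "l = (l \<cdot>\<^sub>v \<phi>) \<bullet>c \<phi>" using cprod_smult[OF phi_c phi_c, of l 1] phi1 by simp
  also have "\<dots> = complex_of_real (p 0)" using pval[OF n0] unfolding U0 phi_eig .
  finally show l0: "l = complex_of_real (p 0)" .
  have ple: "p i \<le> Re l" if i: "i < n" for i
  proof -
    have "eigenvector \<sigma> (col U i) (complex_of_real (p i))" unfolding eigenvector_def
      using sig_c ucol[OF i] peig[OF i] by auto
    from largest[OF this] show ?thesis by simp
  qed
  have "complex_of_real (\<Sum>i<n. p i) = 1" using trace_diag[OF sig_c U sU] tr1 by simp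
  thus ps: "(\<Sum>i<n. p i) = 1" by (metis of_real_eq_1_iff)
  have quad_sig: "Re ((\<sigma> *\<^sub>v v) \<bullet>c v) \<le> Re l" if v: "v \<in> carrier_vec n" and v1: "v \<bullet>c v = 1" for v
  proof -
    define w where "w = mat_adjoint U *\<^sub>v v"
    have w: "w \<in> carrier_vec n" unfolding w_def by (rule mult_mat_vec_carrier[OF u(2) v])
    have "(\<sigma> *\<^sub>v v) \<bullet>c v = (dmat n p *\<^sub>v w) \<bullet>c w"
      unfolding quad_unitary[OF U sig_c v] diag_decomp(2)[OF sig_c U sU] w_def ..
    also have "\<dots> = of_real (\<Sum>i<n. p i * (cmod (w $ i))^2)" by (rule quad_dmat[OF w])
    finally have e1: "Re ((\<sigma> *\<^sub>v v) \<bullet>c v) = (\<Sum>i<n. p i * (cmod (w $ i))^2)" by simp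
    have "w \<bullet>c w = 1" unfolding w_def unitary_norm[OF U v] v1 ..
    hence w1: "(\<Sum>i<n. (cmod (w $ i))^2) = 1" unfolding cprod_self[OF w] by (metis of_real_eq_1_iff)
    have "(\<Sum>i<n. p i * (cmod (w $ i))^2) \<le> (\<Sum>i<n. Re l * (cmod (w $ i))^2)"
      by (rule sum_mono, rule mult_right_mono, insert ple, auto)
    also have "\<dots> = Re l" unfolding sum_distrib_left[symmetric] w1 by simp
    finally show ?thesis unfolding e1 .
  qed
  define X where "X = ket_bra \<psi> - \<sigma>"
  have Kc: "ket_bra \<psi> \<in> carrier_mat n n" by (rule ket_bra_carrier[OF psi_c])
  have Xc: "X \<in> carrier_mat n n" unfolding X_def by (rule minus_carrier_mat[OF sig_c])
  have X_h: "hermitian_mat n X" unfolding hermitian_mat_def X_def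
    using Xc[unfolded X_def] adj_minus[OF Kc sig_c] ket_bra_adj[OF psi_c] sig_a by simp
  obtain V lam where Vc: "V \<in> carrier_mat n n" and VV: "mat_adjoint V * V = 1\<^sub>m n" and XV: "X * V = V * dmat n lam"
    using spectral[OF X_h] by blast
  have V: "unitary_mat n V" unfolding unitary_mat_def using Vc VV by simp
  note v = unitaryD[OF V]
  have Tle: "(\<Sum>i<n. \<bar>lam i\<bar>) \<le> \<epsilon>" using close trace_norm_diag[OF X_h V XV] unfolding X_def by simp
  have "complex_of_real (\<Sum>i<n. lam i) = mtrace X" using trace_diag[OF Xc V XV] by simp
  also have "\<dots> = 0" unfolding X_def mtrace_minus[OF Kc sig_c] ket_bra_trace[OF psi_c] psi1 tr1 by simp
  finally have lsum: "(\<Sum>i<n. lam i) = 0" by (simp only: of_real_eq_0_iff)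
  have quadX: "\<bar>Re ((X *\<^sub>v x) \<bullet>c x)\<bar> \<le> \<epsilon> / 2" if x: "x \<in> carrier_vec n" and x1: "x \<bullet>c x = 1" for x
  proof -
    define w where "w = mat_adjoint V *\<^sub>v x"
    have w: "w \<in> carrier_vec n" unfolding w_def by (rule mult_mat_vec_carrier[OF v(2) x])
    have "(X *\<^sub>v x) \<bullet>c x = (dmat n lam *\<^sub>v w) \<bullet>c w"
      unfolding quad_unitary[OF V Xc x] diag_decomp(2)[OF Xc V XV] w_def ..
    also have "\<dots> = of_real (\<Sum>i<n. lam i * (cmod (w $ i))^2)" by (rule quad_dmat[OF w])
    finally have e1: "Re ((X *\<^sub>v x) \<bullet>c x) = (\<Sum>i<n. lam i * (cmod (w $ i))^2)" by simp
    have "w \<bullet>c w = 1" unfolding w_def unitary_norm[OF V x] x1 ..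
    hence w1: "(\<Sum>i<n. (cmod (w $ i))^2) = 1" unfolding cprod_self[OF w] by (metis of_real_eq_1_iff)
    have "\<bar>\<Sum>i<n. lam i * (cmod (w $ i))^2\<bar> \<le> (\<Sum>i<n. \<bar>lam i\<bar>) / 2"
      by (rule half_bound[OF lsum _ w1], simp)
    thus ?thesis unfolding e1 using Tle by simp
  qed
  have Xquad: "(X *\<^sub>v x) \<bullet>c x = of_real ((cmod (x \<bullet>c \<psi>))^2) - (\<sigma> *\<^sub>v x) \<bullet>c x" if x: "x \<in> carrier_vec n" for x
  proof -
    have "X *\<^sub>v x = ket_bra \<psi> *\<^sub>v x - \<sigma> *\<^sub>v x" unfolding X_def by (rule minus_mult_distrib_mat_vec[OF Kc sig_c x])
    hence "(X *\<^sub>v x) \<bullet>c x = (ket_bra \<psi> *\<^sub>v x) \<bullet>c x - (\<sigma> *\<^sub>v x) \<bullet>c x"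
      using cprod_minus[OF mult_mat_vec_carrier[OF Kc x] mult_mat_vec_carrier[OF sig_c x] x] by simp
    thus ?thesis unfolding ket_bra_quad[OF psi_c x] .
  qed
  have "Re ((X *\<^sub>v \<psi>) \<bullet>c \<psi>) = 1 - Re ((\<sigma> *\<^sub>v \<psi>) \<bullet>c \<psi>)" unfolding Xquad[OF psi_c] psi1 by simp
  moreover have "Re ((X *\<^sub>v \<psi>) \<bullet>c \<psi>) \<le> \<epsilon> / 2" using quadX[OF psi_c psi1] by (rule abs_le_D1)
  ultimately have "1 - Re ((\<sigma> *\<^sub>v \<psi>) \<bullet>c \<psi>) \<le> \<epsilon> / 2" by linarith
  thus Rl: "1 - \<epsilon>/2 \<le> Re l" using quad_sig[OF psi_c psi1] by simp
  have sphi: "(\<sigma> *\<^sub>v \<phi>) \<bullet>c \<phi> = l" using cprod_smult[OF phi_c phi_c, of l 1] phi1 phi_eig by simp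
  have "Re ((X *\<^sub>v \<phi>) \<bullet>c \<phi>) = (cmod (\<phi> \<bullet>c \<psi>))^2 - Re l" unfolding Xquad[OF phi_c] sphi by simp
  moreover have "- Re ((X *\<^sub>v \<phi>) \<bullet>c \<phi>) \<le> \<epsilon> / 2" using quadX[OF phi_c phi1] by (rule abs_le_D2)
  ultimately have "- (\<epsilon> / 2) \<le> (cmod (\<phi> \<bullet>c \<psi>))^2 - Re l" by linarith
  thus "(cmod (\<phi> \<bullet>c \<psi>))^2 \<ge> 1 - \<epsilon>" using Rl by simp
qed



lemma partC:
  fixes n :: nat and \<phi> :: "complex vec" and \<sigma> H :: "complex mat" and \<epsilon> :: real
  assumes sig_h: "hermitian_mat n \<sigma>" and herm: "hermitian_mat n H"
    and U: "unitary_mat n U" and sU: "\<sigma> * U = U * dmat n p" and U0: "col U 0 = \<phi>"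
    and pn: "\<And>i. i < n \<Longrightarrow> 0 \<le> p i" and ps: "(\<Sum>i<n. p i) = 1" and pl: "1 - \<epsilon>/2 \<le> p 0"
    and eps: "0 < \<epsilon>" and n0: "0 < n"
  shows "purity_coh H \<sigma> \<ge> ereal (variance_H H \<phi> * (2 / \<epsilon> - 3))"
proof (cases "mat_support (H * \<sigma> * H) \<subseteq> mat_support \<sigma>")
  case False
  thus ?thesis unfolding purity_coh_def by simp
next
  case True
  note u = unitaryD[OF U]
  have sig_c: "\<sigma> \<in> carrier_mat n n" and sig_a: "mat_adjoint \<sigma> = \<sigma>" using sig_h unfolding hermitian_mat_def by auto
  have Hc: "H \<in> carrier_mat n n" and Ha: "mat_adjoint H = H" using herm unfolding hermitian_mat_def by auto
  define D where "D = dmat n p"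
  define E where "E = dmat n (\<lambda>i. inverse (p i))"
  define K where "K = mat_adjoint U * H * U"
  have Dc: "D \<in> carrier_mat n n" and Ec: "E \<in> carrier_mat n n" unfolding D_def E_def by auto
  have Kc: "K \<in> carrier_mat n n" unfolding K_def by (rule mult3_carrier[OF u(2) Hc u(1)])
  note sq = sq_carrier[of _ n]
  have sD: "\<sigma> = U * D * mat_adjoint U" unfolding D_def by (rule diag_decomp(1)[OF sig_c U sU])
  have HK: "H = U * K * mat_adjoint U" unfolding K_def by (rule conj_fwd[OF U Hc, symmetric])
  have sinv: "supp_inv \<sigma> = U * E * mat_adjoint U" unfolding E_def by (rule supp_inv_diag[OF sig_c U sU])
  have Kadj: "mat_adjoint K = K"
  proof -
    have "mat_adjoint K = mat_adjoint U * mat_adjoint (mat_adjoint U * H)"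
      unfolding K_def by (rule adj_mult[OF mult_carrier_mat[OF u(2) Hc] u(1)])
    also have "mat_adjoint (mat_adjoint U * H) = H * U" using adj_mult[OF u(2) Hc] Ha by simp
    also have "mat_adjoint U * (H * U) = K" unfolding K_def by (rule assoc_mult_mat[symmetric, OF u(2) Hc u(1)])
    finally show ?thesis .
  qed
  have Kh: "hermitian_mat n K" unfolding hermitian_mat_def using Kc Kadj by simp
  define a where "a i j = (cmod (K $$ (i,j)))^2" for i j
  have KK: "K $$ (i,j) * K $$ (j,i) = of_real (a i j)" if i: "i < n" and j: "j < n" for i j
    unfolding a_def hermitian_index[OF Kh j i] by (rule complex_norm_square[symmetric])
  have an: "0 \<le> a i j" for i j unfolding a_def by simp
  have asym: "a i j = a j i" if i: "i < n" and j: "j < n" for i j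
    unfolding a_def hermitian_index[OF Kh i j] by simp
  have KD: "(K * D) $$ (i,j) = K $$ (i,j) * p j" if "i < n" "j < n" for i j
    unfolding D_def by (rule mult_dmat_index[OF Kc that])
  have DK: "(D * K) $$ (i,j) = p i * K $$ (i,j)" if "i < n" "j < n" for i j
    unfolding D_def by (rule dmat_mult_index[OF Kc that])
  have t1: "H * \<sigma> * \<sigma> * H * supp_inv \<sigma> = U * (K * D * D * K * E) * mat_adjoint U"
    unfolding sinv unfolding sD HK
    by (simp only: conj_unitary_mult[OF U] Kc Dc Ec sq)
  have t2: "\<sigma> * (H * H) = U * (D * (K * K)) * mat_adjoint U"
    unfolding sD HK by (simp only: conj_unitary_mult[OF U] Kc Dc Ec sq)
  have KDDK: "(K * D * D * K) $$ (i,i) = of_real (\<Sum>j<n. (p j)^2 * a i j)" if i: "i < n" for i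
  proof -
    have "(K * D * D * K) $$ (i,i) = (\<Sum>j<n. (K * D * D) $$ (i,j) * K $$ (j,i))"
      by (rule mult_index[OF sq[OF sq[OF Kc Dc] Dc] Kc i i])
    also have "\<dots> = (\<Sum>j<n. of_real ((p j)^2 * a i j))"
    proof (rule sum.cong[OF refl])
      fix j assume "j \<in> {..<n}" hence j: "j < n" by simp
      have "(K * D * D) $$ (i,j) = (K * D) $$ (i,j) * p j" unfolding D_def by (rule mult_dmat_index[OF sq[OF Kc Dc[unfolded D_def]] i j])
      also have "\<dots> = K $$ (i,j) * p j * p j" unfolding KD[OF i j] ..
      finally show "(K * D * D) $$ (i,j) * K $$ (j,i) = of_real ((p j)^2 * a i j)"
        using KK[OF i j] by (simp add: power2_eq_square mult_ac)
    qed
    finally show ?thesis by simp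
  qed
  have tr1: "mtrace (K * D * D * K * E) = of_real (\<Sum>i<n. \<Sum>j<n. inverse (p i) * (p j)^2 * a i j)"
  proof -
    have KDDKc: "K * D * D * K \<in> carrier_mat n n" using Kc Dc by (simp add: sq)
    have "mtrace (K * D * D * K * E) = (\<Sum>i<n. (K * D * D * K * E) $$ (i,i))"
      by (rule mtrace_carrier, rule sq[OF KDDKc Ec])
    also have "\<dots> = (\<Sum>i<n. of_real (\<Sum>j<n. inverse (p i) * (p j)^2 * a i j))"
    proof (rule sum.cong[OF refl])
      fix i assume "i \<in> {..<n}" hence i: "i < n" by simp
      have "(K * D * D * K * E) $$ (i,i) = (K * D * D * K) $$ (i,i) * inverse (p i)"
        unfolding E_def by (rule mult_dmat_index[OF KDDKc i i])
      thus "(K * D * D * K * E) $$ (i,i) = of_real (\<Sum>j<n. inverse (p i) * (p j)^2 * a i j)"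
        unfolding KDDK[OF i] by (simp add: sum_distrib_left sum_distrib_right mult_ac)
    qed
    finally show ?thesis by simp
  qed
  have tr2: "mtrace (D * (K * K)) = of_real (\<Sum>i<n. \<Sum>j<n. p i * a i j)"
  proof -
    have "mtrace (D * (K * K)) = (\<Sum>i<n. (D * (K * K)) $$ (i,i))"
      by (rule mtrace_carrier, rule sq[OF Dc sq[OF Kc Kc]])
    also have "\<dots> = (\<Sum>i<n. of_real (\<Sum>j<n. p i * a i j))"
    proof (rule sum.cong[OF refl])
      fix i assume "i \<in> {..<n}" hence i: "i < n" by simp
      have "(D * (K * K)) $$ (i,i) = p i * (K * K) $$ (i,i)" unfolding D_def by (rule dmat_mult_index[OF sq[OF Kc Kc] i i])
      also have "(K * K) $$ (i,i) = (\<Sum>j<n. K $$ (i,j) * K $$ (j,i))" by (rule mult_index[OF Kc Kc i i])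
      also have "\<dots> = (\<Sum>j<n. of_real (a i j))" by (rule sum.cong[OF refl], rule KK[OF i], simp)
      finally show "(D * (K * K)) $$ (i,i) = of_real (\<Sum>j<n. p i * a i j)" by (simp add: sum_distrib_left)
    qed
    finally show ?thesis by simp
  qed
  have val: "Re (mtrace (H * \<sigma> * \<sigma> * H * supp_inv \<sigma>) - mtrace (\<sigma> * (H * H)))
     = (\<Sum>i<n. \<Sum>j<n. inverse (p i) * (p j)^2 * a i j) - (\<Sum>i<n. \<Sum>j<n. p i * a i j)"
    unfolding t1 t2 mtrace_unitary[OF U sq[OF sq[OF sq[OF sq[OF Kc Dc] Dc] Kc] Ec]] mtrace_unitary[OF U sq[OF Dc sq[OF Kc Kc]]] tr1 tr2
    by (simp only: of_real_diff[symmetric] Re_complex_of_real)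
  have supp: "p j * a k j = 0" if k: "k < n" and j: "j < n" and pk: "p k = 0" for k j
  proof -
    have ck: "col U k \<in> carrier_vec n" using u(1) by auto
    have HsH: "H * \<sigma> * H \<in> carrier_mat n n" by (rule mult3_carrier[OF Hc sig_c Hc])
    have "H * \<sigma> * H *\<^sub>v col U k \<in> mat_support (H * \<sigma> * H)"
      unfolding mat_support_def using HsH ck Hc by auto
    with True obtain w where w: "w \<in> carrier_vec (dim_col \<sigma>)" and hw: "H * \<sigma> * H *\<^sub>v col U k = \<sigma> *\<^sub>v w"
      unfolding mat_support_def by blast
    have w': "w \<in> carrier_vec n" using w sig_c by simp
    have "(H * \<sigma> * H *\<^sub>v col U k) \<bullet>c col U k = w \<bullet>c (\<sigma> *\<^sub>v col U k)"
      unfolding hw using cprod_adj[OF sig_c w' ck] sig_a by simp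
    also have "\<sigma> *\<^sub>v col U k = 0 \<cdot>\<^sub>v col U k" using eig_col[OF sig_c u(1) sU k] pk by simp
    also have "w \<bullet>c (0 \<cdot>\<^sub>v col U k) = 0" using cprod_smult[OF w' ck, of 1 0] by simp
    finally have z: "(H * \<sigma> * H *\<^sub>v col U k) \<bullet>c col U k = 0" .
    have "H * \<sigma> * H = U * (K * D * K) * mat_adjoint U"
      unfolding sD HK by (simp only: conj_unitary_mult[OF U] Kc Dc sq)
    hence "mat_adjoint U * (H * \<sigma> * H) * U = K * D * K" using conj_back[OF U sq[OF sq[OF Kc Dc] Kc]] by simp
    hence "(K * D * K) $$ (k,k) = 0" using col_quad[OF u(1) HsH k] z by simp
    moreover have "(K * D * K) $$ (k,k) = of_real (\<Sum>j<n. p j * a k j)"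
    proof -
      have "(K * D * K) $$ (k,k) = (\<Sum>j<n. (K * D) $$ (k,j) * K $$ (j,k))" by (rule mult_index[OF sq[OF Kc Dc] Kc k k])
      also have "\<dots> = (\<Sum>j<n. of_real (p j * a k j))"
        by (rule sum.cong[OF refl], simp add: KD[OF k] KK[OF k, symmetric] mult_ac)
      finally show ?thesis by simp
    qed
    ultimately have "complex_of_real (\<Sum>j<n. p j * a k j) = 0" by simp
    hence s0: "(\<Sum>j<n. p j * a k j) = 0" by (simp only: of_real_eq_0_iff)
    have "\<forall>j\<in>{..<n}. p j * a k j = 0" using s0 by (subst (asm) sum_nonneg_eq_0_iff, auto intro: mult_nonneg_nonneg pn an)
    thus ?thesis using j by simp
  qed
  have var: "variance_H H \<phi> = (\<Sum>j<n. a 0 j) - a 0 0"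
  proof -
    have HH: "H * H \<in> carrier_mat n n" by (rule sq[OF Hc Hc])
    have "H * H = U * (K * K) * mat_adjoint U" unfolding HK by (simp only: conj_unitary_mult[OF U] Kc sq)
    hence e1: "mat_adjoint U * (H * H) * U = K * K" using conj_back[OF U sq[OF Kc Kc]] by simp
    have "((H * H) *\<^sub>v \<phi>) \<bullet>c \<phi> = (K * K) $$ (0,0)" using col_quad[OF u(1) HH n0] unfolding e1 U0 by simp
    also have "\<dots> = (\<Sum>j<n. K $$ (0,j) * K $$ (j,0))" by (rule mult_index[OF Kc Kc n0 n0])
    also have "\<dots> = of_real (\<Sum>j<n. a 0 j)" by (simp add: KK[OF n0])
    finally have v1: "((H * H) *\<^sub>v \<phi>) \<bullet>c \<phi> = of_real (\<Sum>j<n. a 0 j)" .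
    have v2: "(H *\<^sub>v \<phi>) \<bullet>c \<phi> = K $$ (0,0)" using col_quad[OF u(1) Hc n0] unfolding K_def U0 by simp
    have "K $$ (0,0) = cnj (K $$ (0,0))" by (rule hermitian_index[OF Kh n0 n0])
    hence "K $$ (0,0) = of_real (Re (K $$ (0,0)))" by (metis Reals_cnj_iff complex_is_Real_iff of_real_Re)
    hence "(K $$ (0,0))^2 = of_real (a 0 0)" unfolding a_def by (metis norm_of_real of_real_power power2_abs)
    thus ?thesis unfolding variance_H_def v1 v2 by simp
  qed
  have "((\<Sum>j<n. a 0 j) - a 0 0) * (2/\<epsilon> - 3) \<le> (\<Sum>i<n. \<Sum>j<n. inverse (p i) * (p j)^2 * a i j) - (\<Sum>i<n. \<Sum>j<n. p i * a i j)"
    by (rule real_main[OF n0 pn ps pl eps], insert an asym supp, auto)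
  thus ?thesis unfolding purity_coh_def using True val var by simp
qed


theorem mainTheorem18:
  fixes n :: nat and \<psi> \<phi> :: "complex vec" and \<sigma> H :: "complex mat"
    and \<epsilon> :: real and l :: complex
  assumes psi: "unit_state n \<psi>"
    and sigma: "density_op n \<sigma>"
    and herm: "hermitian_mat n H"
    and eps: "0 < \<epsilon>"
    and close: "trace_norm (ket_bra \<psi> - \<sigma>) \<le> \<epsilon>"
    and phi: "unit_state n \<phi>" "eigenvector \<sigma> \<phi> l"
    and largest: "\<And>\<mu> w. eigenvector \<sigma> w \<mu> \<Longrightarrow> Re \<mu> \<le> Re l"
  shows "(cmod (\<phi> \<bullet>c \<psi>))^2 \<ge> 1 - \<epsilon> \<and>
         purity_coh H \<sigma> \<ge> ereal (variance_H H \<phi> * (2 / \<epsilon> - 3))"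
proof -
  have phi_c: "\<phi> \<in> carrier_vec n" and phi1: "\<phi> \<bullet>c \<phi> = 1" using phi(1) unfolding unit_state_def by auto
  have sig_h: "hermitian_mat n \<sigma>" using sigma unfolding density_op_def psd_mat_def by auto
  have sig_c: "\<sigma> \<in> carrier_mat n n" using sig_h unfolding hermitian_mat_def by auto
  have phi_eig: "\<sigma> *\<^sub>v \<phi> = l \<cdot>\<^sub>v \<phi>" using phi(2) unfolding eigenvector_def by auto
  obtain U p where Uc: "U \<in> carrier_mat n n" and UU: "mat_adjoint U * U = 1\<^sub>m n"
    and sU: "\<sigma> * U = U * dmat n p" and U0: "col U 0 = \<phi>"
    using spectral_with[OF sig_h phi_c phi1 phi_eig] by blast
  have U: "unitary_mat n U" unfolding unitary_mat_def using Uc UU by simp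
  note ab = partAB[OF psi sigma eps close phi largest U sU U0]
  have pl: "1 - \<epsilon>/2 \<le> p 0" using ab(2) ab(3) by simp
  have "purity_coh H \<sigma> \<ge> ereal (variance_H H \<phi> * (2 / \<epsilon> - 3))"
    by (rule partC[OF sig_h herm U sU U0 ab(4) ab(5) pl eps ab(6)])
  thus ?thesis using ab(1) by simp
qed

end
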